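(* Let $n \geq 1$ and let $Q, R$ be fixed real symmetric positive semidefinite $n \times n$ matrices, and let $S = \begin{pmatrix} Q & 0 \\ 0 & R \end{pmatrix}$ be the $2n \times 2n$ block-diagonal matrix. Let $U, V$ be independent random $n \times n$ matrices, each distributed uniformly (Haar) on the set of $n \times n$ orthogonal matrices, and let $u_j, v_j$ denote the $j$-th columns of $U$ and $V$. Define $\mu = \min_{j \leq n} \left( u_j^\top Q u_j + v_j^\top R v_j \right)$. Then $$\forall\, 0 \leq \gamma \leq 1,\quad \mathbb{P}\left( \mu \geq \frac{\operatorname{tr}(S)}{2n}(1-\gamma) \right) \geq 1 - n\, e^{-\frac{\operatorname{tr}(S)^2}{4\|S\|_F^2}\gamma^2} - 2 e^{-\frac{n}{8}},$$ and, for all $\gamma \geq 0$, $$\mathbb{P}\left( \mu \leq \frac{4\operatorname{tr}(S)}{n}(1+\gamma) \right) \geq \begin{cases} 1 - e^{-\frac{\operatorname{tr}(S)^2}{8\|S\|_F^2}\gamma^2} - 2e^{-\frac{n}{8}} & \text{if } \gamma \leq \frac{\|S\|_F^2}{\operatorname{tr}(S)\,\|S\|_{op}}, \\ 1 - e^{-\frac{\operatorname{tr}(S)}{8\|S\|_{op}}\gamma} - 2e^{-\frac{n}{8}} & \text{otherwise.} \end{cases}$$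
   Context: $\|\cdot\|_F$ denotes the Frobenius norm and $\|\cdot\|_{op}$ the operator (spectral) norm. $\operatorname{tr}$ is the trace. *)

theory Defs
  imports "HOL-Probability.Probability"
begin

definition psd_matrix :: "real^'n^'n \<Rightarrow> bool" where
  "psd_matrix Q \<longleftrightarrow> transpose Q = Q \<and> (\<forall>x. 0 \<le> x \<bullet> (Q *v x))"

text \<open>Haar (uniform) probability measure on the orthogonal group O(n), characterised as a
Borel probability measure on n x n real matrices, concentrated on the orthogonal matrices and
invariant under left multiplication by orthogonal matrices (unique by uniqueness of Haar measure).\<close>
definition haar_orthogonal :: "(real^'n^'n) measure \<Rightarrow> bool" where
  "haar_orthogonal M \<longleftrightarrow> sets M = sets borel \<and> prob_space M \<and>
     emeasure M {U. orthogonal_matrix U} = 1 \<and>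
     (\<forall>A. orthogonal_matrix A \<longrightarrow> distr M borel (\<lambda>U. A ** U) = M)"

definition block_diag :: "real^'n^'n \<Rightarrow> real^'n^'n \<Rightarrow> real^('n + 'n)^('n + 'n)" where
  "block_diag Q R = (\<chi> i j. case (i, j) of
       (Inl a, Inl b) \<Rightarrow> Q $ a $ b
     | (Inr a, Inr b) \<Rightarrow> R $ a $ b
     | _ \<Rightarrow> 0)"

definition frob_norm :: "real^'m^'k \<Rightarrow> real" where
  "frob_norm A = sqrt (\<Sum>i\<in>UNIV. \<Sum>j\<in>UNIV. (A $ i $ j)^2)"

definition op_norm :: "real^'m^'k \<Rightarrow> real" where
  "op_norm A = onorm (\<lambda>x. A *v x)"

definition min_diag :: "real^'n^'n \<Rightarrow> real^'n^'n \<Rightarrow> real^'n^'n \<Rightarrow> real^'n^'n \<Rightarrow> real" where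
  "min_diag Q R U V = Min (range (\<lambda>j. column j U \<bullet> (Q *v column j U) + column j V \<bullet> (R *v column j V)))"

end

theory Submission
  imports Defs
begin

typedef 'a wo = "UNIV :: 'a set" by auto

instance wo :: (finite) finite
proof
  have "(UNIV :: 'a wo set) = Abs_wo ` UNIV"
    by (metis Rep_wo_inverse surj_def)
  then show "finite (UNIV :: 'a wo set)" by (metis finite_class.finite_UNIV finite_imageI)
qed

instantiation wo :: (finite) linorder
begin
definition less_eq_wo :: "'a wo \<Rightarrow> 'a wo \<Rightarrow> bool" where
  "less_eq_wo x y \<longleftrightarrow> to_nat (Rep_wo x) \<le> to_nat (Rep_wo y)"
definition less_wo :: "'a wo \<Rightarrow> 'a wo \<Rightarrow> bool" where
  "less_wo x y \<longleftrightarrow> to_nat (Rep_wo x) < to_nat (Rep_wo y)"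
instance
proof
  fix x y z :: "'a wo"
  show "(x < y) = (x \<le> y \<and> \<not> y \<le> x)" by (auto simp: less_eq_wo_def less_wo_def)
  show "x \<le> x" by (simp add: less_eq_wo_def)
  show "x \<le> y \<Longrightarrow> y \<le> z \<Longrightarrow> x \<le> z" by (simp add: less_eq_wo_def)
  show "x \<le> y \<Longrightarrow> y \<le> x \<Longrightarrow> x = y"
    by (simp add: less_eq_wo_def Rep_wo_inject)
  show "x \<le> y \<or> y \<le> x" by (auto simp: less_eq_wo_def)
qed
end

instance wo :: (finite) wellorder
proof
  fix P :: "'a wo \<Rightarrow> bool" and a
  assume H: "\<And>x. (\<And>y. y < x \<Longrightarrow> P y) \<Longrightarrow> P x"
  have "\<forall>x. to_nat (Rep_wo x) = k \<longrightarrow> P x" for k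
    by (induction k rule: less_induct) (metis H less_wo_def)
  then show "P a" by blast
qed


lemma orth_lborel_wo:
  fixes Om :: "real^('k::{finite,wellorder})^('k::{finite,wellorder})"
  assumes Om: "orthogonal_matrix Om"
  shows "distr lborel borel (\<lambda>x. Om *v x) = lborel"
proof (rule lborel_eqI[symmetric])
  show "sets (distr lborel borel (\<lambda>x. Om *v x)) = sets borel" by simp
  fix l u :: "real^('k::{finite,wellorder})"
  assume le: "\<And>b. b \<in> Basis \<Longrightarrow> l \<bullet> b \<le> u \<bullet> b"
  let ?g = "\<lambda>x. transpose Om *v x"
  have meas: "(\<lambda>x. Om *v x) \<in> borel_measurable borel"
    by (intro borel_measurable_continuous_onI matrix_vector_mult_linear_continuous_on)
  have pre: "(\<lambda>x. Om *v x) -` box l u = ?g ` box l u"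
  proof -
    have 1: "transpose Om ** Om = mat 1" "Om ** transpose Om = mat 1" using Om by (auto simp: orthogonal_matrix_def)
    have i1: "transpose Om *v (Om *v x) = x" for x
      by (metis matrix_vector_mul_assoc 1(1) matrix_vector_mul_lid)
    have i2: "Om *v (transpose Om *v x) = x" for x
      by (metis matrix_vector_mul_assoc 1(2) matrix_vector_mul_lid)
    show ?thesis
    proof (rule set_eqI, rule iffI)
      fix x assume "x \<in> (\<lambda>x. Om *v x) -` box l u"
      then have "Om *v x \<in> box l u" by (simp only: vimage_eq)
      then show "x \<in> ?g ` box l u" by (metis i1 image_eqI)
    next
      fix x assume "x \<in> ?g ` box l u"
      then obtain y where y: "y \<in> box l u" "x = ?g y" by blast
      then show "x \<in> (\<lambda>x. Om *v x) -` box l u" by (simp only: vimage_eq i2)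
    qed
  qed
  define g where "g = ?g"
  have og: "orthogonal_transformation g"
    unfolding g_def using Om by (simp add: orthogonal_transformation_matrix del: transpose_matrix_vector)
  have pre': "(\<lambda>x. Om *v x) -` box l u = g ` box l u" unfolding g_def by (rule pre)
  have bl: "box l u \<in> lmeasurable" by simp
  have gl: "g ` box l u \<in> lmeasurable" using measurable_orthogonal_image[OF og bl] .
  have mg: "measure lebesgue (g ` box l u) = measure lebesgue (box l u)"
    using measure_orthogonal_image[OF og bl] .
  have bor0: "(\<lambda>x. Om *v x) -` box l u \<inter> space borel \<in> sets borel"
    by (rule measurable_sets[OF meas]) simp
  have bor: "g ` box l u \<in> sets borel" using bor0 pre' by simp
  have "emeasure (distr lborel borel (\<lambda>x. Om *v x)) (box l u) = emeasure lborel ((\<lambda>x. Om *v x) -` box l u \<inter> space lborel)"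
    by (rule emeasure_distr) (use meas in auto)
  also have "\<dots> = emeasure lborel (g ` box l u)" using pre' by simp
  also have "\<dots> = emeasure lebesgue (g ` box l u)"
    using bor by (simp add: emeasure_completion)
  also have "\<dots> = ennreal (measure lebesgue (g ` box l u))"
    by (rule emeasure_eq_measure2[OF gl])
  also have "\<dots> = ennreal (measure lebesgue (box l u))" by (simp add: mg)
  also have "\<dots> = emeasure lebesgue (box l u)"
    by (rule emeasure_eq_measure2[OF bl, symmetric])
  also have "\<dots> = emeasure lborel (box l u)"
    by (simp add: emeasure_completion)
  also have "\<dots> = (\<Prod>b\<in>Basis. (u - l) \<bullet> b)"
    by (rule emeasure_lborel_box) (use le in auto)
  finally show "emeasure (distr lborel borel (\<lambda>x. Om *v x)) (box l u) = (\<Prod>b\<in>Basis. (u - l) \<bullet> b)" .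
qed


definition cv :: "real^'n \<Rightarrow> real^('n wo)" where "cv x = (\<chi> i. x $ Rep_wo i)"
definition vc :: "real^('n wo) \<Rightarrow> real^'n" where "vc y = (\<chi> i. y $ Abs_wo i)"

lemma vc_cv[simp]: "vc (cv x) = x" by (simp add: vc_def cv_def Abs_wo_inverse)
lemma cv_vc[simp]: "cv (vc x) = x" by (simp add: vc_def cv_def Rep_wo_inverse)

lemma prod_Basis_cart: "(\<Prod>b\<in>(Basis :: (real^'m) set). f b) = (\<Prod>i\<in>UNIV. f (axis i 1))"
proof -
  have B: "(Basis :: (real^'m) set) = (\<lambda>i. axis i 1) ` UNIV"
    by (auto simp: Basis_vec_def)
  have inj: "inj (\<lambda>i::'m. axis i (1::real))"
    by (auto simp: inj_def axis_eq_axis)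
  show ?thesis unfolding B by (subst prod.reindex[OF inj]) simp
qed

lemma prod_wo: "(\<Prod>i\<in>UNIV. f (Rep_wo i)) = (\<Prod>i\<in>(UNIV::'n::finite set). f i)"
proof -
  have "bij_betw Rep_wo (UNIV :: 'n wo set) (UNIV :: 'n set)"
    by (rule bij_betw_byWitness[where f'=Abs_wo]) (auto simp: Rep_wo_inverse Abs_wo_inverse)
  then show ?thesis by (rule prod.reindex_bij_betw)
qed

lemma sum_wo: "(\<Sum>i\<in>UNIV. f (Rep_wo i)) = (\<Sum>i\<in>(UNIV::'n::finite set). f i)"
proof -
  have "bij_betw Rep_wo (UNIV :: 'n wo set) (UNIV :: 'n set)"
    by (rule bij_betw_byWitness[where f'=Abs_wo]) (auto simp: Rep_wo_inverse Abs_wo_inverse)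
  then show ?thesis by (rule sum.reindex_bij_betw)
qed

lemma vc_measurable[measurable]: "vc \<in> borel_measurable borel"
proof -
  have "linear vc" by (auto simp: linear_iff vc_def vec_eq_iff)
  then show ?thesis by (intro borel_measurable_continuous_onI linear_continuous_on) (simp add: linear_conv_bounded_linear)
qed

lemma lborel_vc: "distr lborel borel vc = (lborel :: (real^'n::finite) measure)"
proof (rule lborel_eqI[symmetric])
  show "sets (distr lborel borel vc) = sets (borel :: (real^'n) measure)" by simp
  fix l u :: "real^'n"
  assume le: "\<And>b. b \<in> Basis \<Longrightarrow> l \<bullet> b \<le> u \<bullet> b"
  have pre: "vc -` box l u = box (cv l) (cv u)"
    by (auto simp: mem_box_cart vc_def cv_def) (metis Abs_wo_cases Abs_wo_inverse UNIV_I)+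
  have lej: "l $ j \<le> u $ j" for j
    using le[of "axis j 1"] by (simp add: cart_eq_inner_axis)
  have le2: "\<And>b. b \<in> Basis \<Longrightarrow> cv l \<bullet> b \<le> cv u \<bullet> b"
    using lej by (auto simp: Basis_vec_def cv_def inner_axis)
  have "emeasure (distr lborel borel vc) (box l u) = emeasure lborel (vc -` box l u \<inter> space lborel)"
    by (rule emeasure_distr) auto
  also have "\<dots> = emeasure lborel (box (cv l) (cv u))" by (simp add: pre)
  also have "\<dots> = (\<Prod>b\<in>Basis. (cv u - cv l) \<bullet> b)"
    by (rule emeasure_lborel_box) (use le2 in auto)
  also have "\<dots> = (\<Prod>b\<in>Basis. (u - l) \<bullet> b)"
    using prod_wo[of "\<lambda>i. u $ i - l $ i"] by (simp add: prod_Basis_cart inner_axis cv_def)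
  finally show "emeasure (distr lborel borel vc) (box l u) = (\<Prod>b\<in>Basis. (u - l) \<bullet> b)" .
qed

lemma orth_lborel:
  fixes Om :: "real^'n::finite^'n"
  assumes Om: "orthogonal_matrix Om"
  shows "distr lborel borel (\<lambda>x. Om *v x) = lborel"
proof -
  define Om' :: "real^('n wo)^('n wo)" where "Om' = (\<chi> i j. Om $ Rep_wo i $ Rep_wo j)"
  have T: "transpose Om ** Om = mat 1" using Om by (simp add: orthogonal_matrix_def)
  have "transpose Om' ** Om' = mat 1"
  proof -
    have "(transpose Om' ** Om') $ i $ j = (mat 1 :: real^('n wo)^('n wo)) $ i $ j" for i j
    proof -
      have "(transpose Om' ** Om') $ i $ j = (\<Sum>k\<in>UNIV. Om $ Rep_wo k $ Rep_wo i * Om $ Rep_wo k $ Rep_wo j)"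
        by (simp add: matrix_matrix_mult_def transpose_def Om'_def)
      also have "\<dots> = (\<Sum>k\<in>UNIV. Om $ k $ Rep_wo i * Om $ k $ Rep_wo j)"
        by (rule sum_wo)
      also have "\<dots> = (transpose Om ** Om) $ Rep_wo i $ Rep_wo j"
        by (simp add: matrix_matrix_mult_def transpose_def)
      also have "\<dots> = (mat 1 :: real^('n wo)^('n wo)) $ i $ j"
        by (simp add: T mat_def Rep_wo_inject)
      finally show ?thesis .
    qed
    then show ?thesis by (simp add: vec_eq_iff)
  qed
  then have O': "orthogonal_matrix Om'" by (simp add: orthogonal_matrix)
  have comm: "(\<lambda>x. Om *v x) \<circ> vc = vc \<circ> (\<lambda>y. Om' *v y)"
  proof
    fix y :: "real^('n wo)"
    have "(Om *v vc y) $ i = (vc (Om' *v y)) $ i" for i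
    proof -
      have "(Om *v vc y) $ i = (\<Sum>j\<in>UNIV. Om $ i $ j * y $ Abs_wo j)"
        by (simp add: matrix_vector_mult_def vc_def)
      also have "\<dots> = (\<Sum>j\<in>UNIV. Om $ i $ Rep_wo j * y $ Abs_wo (Rep_wo j))"
        by (rule sum_wo[symmetric])
      also have "\<dots> = (vc (Om' *v y)) $ i"
        by (simp add: matrix_vector_mult_def vc_def Om'_def Rep_wo_inverse Abs_wo_inverse)
      finally show ?thesis .
    qed
    then show "((\<lambda>x. Om *v x) \<circ> vc) y = (vc \<circ> (\<lambda>y. Om' *v y)) y" by (simp add: vec_eq_iff)
  qed
  have m1: "(\<lambda>x. Om *v x) \<in> borel_measurable borel"
    by (intro borel_measurable_continuous_onI matrix_vector_mult_linear_continuous_on)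
  have m2: "(\<lambda>x. Om' *v x) \<in> borel_measurable borel"
    by (intro borel_measurable_continuous_onI matrix_vector_mult_linear_continuous_on)
  have "distr lborel borel (\<lambda>x. Om *v x) = distr (distr lborel borel vc) borel (\<lambda>x. Om *v x)"
    by (simp add: lborel_vc)
  also have "\<dots> = distr lborel borel ((\<lambda>x. Om *v x) \<circ> vc)"
    by (rule distr_distr) (use m1 in auto)
  also have "\<dots> = distr lborel borel (vc \<circ> (\<lambda>y. Om' *v y))" by (simp add: comm)
  also have "\<dots> = distr (distr lborel borel (\<lambda>y. Om' *v y)) borel vc"
    by (rule distr_distr[symmetric]) (use m2 in auto)
  also have "\<dots> = distr lborel borel vc" by (simp add: orth_lborel_wo[OF O'])
  also have "\<dots> = lborel" by (rule lborel_vc)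
  finally show ?thesis .
qed

definition gdens :: "real^'n \<Rightarrow> real" where
  "gdens x = (\<Prod>i\<in>UNIV. std_normal_density (x $ i))"

definition gauss :: "(real^'n) measure" where
  "gauss = density lborel (\<lambda>x. ennreal (gdens x))"

lemma gdens_nonneg: "0 \<le> gdens x"
  by (simp add: gdens_def prod_nonneg)

lemma gdens_measurable[measurable]: "gdens \<in> borel_measurable borel"
  unfolding gdens_def by measurable

lemma sets_gauss[simp, measurable_cong]: "sets gauss = sets borel"
  by (simp add: gauss_def)

lemma space_gauss[simp]: "space gauss = UNIV"
  by (simp add: gauss_def)

lemma norm_sq_cart: "(norm (x::real^'n))\<^sup>2 = (\<Sum>i\<in>UNIV. (x $ i)\<^sup>2)"
  unfolding power2_norm_eq_inner inner_vec_def by (simp add: power2_eq_square)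

lemma gdens_norm: "gdens (x::real^'n) = (1 / sqrt (2 * pi)) ^ CARD('n) * exp (- (norm x)\<^sup>2 / 2)"
proof -
  have "gdens x = (\<Prod>i\<in>UNIV. (1 / sqrt (2 * pi)) * exp (- (x $ i)\<^sup>2 / 2))"
    by (simp add: gdens_def std_normal_density_def)
  also have "\<dots> = (1 / sqrt (2 * pi)) ^ CARD('n) * (\<Prod>i\<in>UNIV. exp (- (x $ i)\<^sup>2 / 2))"
    by (simp only: prod.distrib prod_constant card_UNIV)
  also have "(\<Prod>i\<in>UNIV. exp (- (x $ i)\<^sup>2 / 2)) = exp (\<Sum>i\<in>UNIV. - (x $ i)\<^sup>2 / 2)"
    by (simp add: exp_sum)
  also have "(\<Sum>i\<in>UNIV. - (x $ i)\<^sup>2 / 2) = - (norm x)\<^sup>2 / 2"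
    by (simp add: norm_sq_cart sum_negf sum_divide_distrib)
  finally show ?thesis .
qed

lemma orth_norm: "orthogonal_matrix (Om::real^'n^'n) \<Longrightarrow> norm (Om *v x) = norm x"
  using orthogonal_transformation_norm[of "(*v) Om"]
  by (simp add: orthogonal_transformation_matrix)

lemma gdens_orth: "orthogonal_matrix (Om::real^'n^'n) \<Longrightarrow> gdens (Om *v x) = gdens x"
  by (simp add: gdens_norm orth_norm)

lemma gauss_orth:
  fixes Om :: "real^'n^'n" and f :: "real^'n \<Rightarrow> ennreal"
  assumes Om: "orthogonal_matrix Om" and f[measurable]: "f \<in> borel_measurable borel"
  shows "(\<integral>\<^sup>+x. f (Om *v x) \<partial>gauss) = (\<integral>\<^sup>+x. f x \<partial>gauss)"
proof -
  have m1[measurable]: "(\<lambda>x. Om *v x) \<in> borel_measurable borel"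
    by (intro borel_measurable_continuous_onI matrix_vector_mult_linear_continuous_on)
  have "(\<integral>\<^sup>+x. f (Om *v x) \<partial>gauss) = (\<integral>\<^sup>+x. ennreal (gdens x) * f (Om *v x) \<partial>lborel)"
    unfolding gauss_def by (rule nn_integral_density) measurable
  also have "\<dots> = (\<integral>\<^sup>+x. (\<lambda>y. ennreal (gdens y) * f y) (Om *v x) \<partial>lborel)"
    by (simp add: gdens_orth[OF Om])
  also have "\<dots> = (\<integral>\<^sup>+y. ennreal (gdens y) * f y \<partial>(distr lborel borel (\<lambda>x. Om *v x)))"
    by (rule nn_integral_distr[symmetric]) measurable
  also have "\<dots> = (\<integral>\<^sup>+y. ennreal (gdens y) * f y \<partial>lborel)"
    by (simp add: orth_lborel[OF Om])
  also have "\<dots> = (\<integral>\<^sup>+x. f x \<partial>gauss)"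
    unfolding gauss_def by (rule nn_integral_density[symmetric]) measurable
  finally show ?thesis .
qed

lemma gauss_prod:
  fixes h :: "'n::finite \<Rightarrow> real \<Rightarrow> ennreal"
  assumes [measurable]: "\<And>i. h i \<in> borel_measurable borel"
  shows "(\<integral>\<^sup>+x. (\<Prod>i\<in>UNIV. h i (x $ i)) \<partial>(gauss :: (real^'n) measure))
     = (\<Prod>i\<in>UNIV. \<integral>\<^sup>+y. ennreal (std_normal_density y) * h i y \<partial>lborel)"
proof -
  define F where "F b y = ennreal (std_normal_density y) * h (axis_index b) y" for b :: "real^'n" and y
  have [measurable]: "F b \<in> borel_measurable borel" for b unfolding F_def by measurable
  have eq: "ennreal (gdens x) * (\<Prod>i\<in>UNIV. h i (x $ i)) = (\<Prod>b\<in>Basis. F b (x \<bullet> b))" for x :: "real^'n"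
  proof -
    have "ennreal (gdens x) = (\<Prod>i\<in>UNIV. ennreal (std_normal_density (x $ i)))"
      unfolding gdens_def by (rule prod_ennreal[symmetric]) simp
    then have "ennreal (gdens x) * (\<Prod>i\<in>UNIV. h i (x $ i)) = (\<Prod>i\<in>UNIV. F (axis i 1) (x $ i))"
      by (simp add: F_def prod.distrib)
    also have "\<dots> = (\<Prod>b\<in>Basis. F b (x \<bullet> b))"
      by (simp add: prod_Basis_cart inner_axis)
    finally show ?thesis .
  qed
  have "(\<integral>\<^sup>+x. (\<Prod>i\<in>UNIV. h i (x $ i)) \<partial>(gauss :: (real^'n) measure))
      = (\<integral>\<^sup>+x. ennreal (gdens x) * (\<Prod>i\<in>UNIV. h i (x $ i)) \<partial>lborel)"
    unfolding gauss_def by (rule nn_integral_density) measurable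
  also have "\<dots> = (\<integral>\<^sup>+x. (\<Prod>b\<in>Basis. F b (x \<bullet> b)) \<partial>lborel)"
    by (simp add: eq)
  also have "\<dots> = (\<Prod>b\<in>Basis. (\<integral>\<^sup>+y. F b y \<partial>lborel))"
    by (rule nn_integral_lborel_prod) auto
  also have "\<dots> = (\<Prod>i\<in>UNIV. \<integral>\<^sup>+y. ennreal (std_normal_density y) * h i y \<partial>lborel)"
    by (simp add: prod_Basis_cart F_def)
  finally show ?thesis .
qed

lemma nn_integral_std_normal:
  assumes s: "0 < s" shows "(\<integral>\<^sup>+y. ennreal (normal_density m s y) \<partial>lborel) = 1"
proof -
  interpret prob_space "density lborel (normal_density m s)" by (rule prob_space_normal_density) (rule s)
  have "emeasure (density lborel (normal_density m s)) UNIV = 1"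
    using emeasure_space_1 by simp
  then show ?thesis by (simp add: emeasure_density)
qed

lemma prob_space_gauss: "prob_space (gauss :: (real^'n) measure)"
proof
  have "emeasure (gauss :: (real^'n) measure) (space gauss) = (\<integral>\<^sup>+x. (\<Prod>i\<in>(UNIV::'n set). (\<lambda>_ _. 1::ennreal) i (x $ i)) \<partial>gauss)"
    by (simp add: nn_integral_const)
  also have "\<dots> = (\<Prod>i\<in>(UNIV::'n set). \<integral>\<^sup>+y. ennreal (std_normal_density y) * 1 \<partial>lborel)"
    by (rule gauss_prod) simp
  also have "\<dots> = 1" by (simp add: nn_integral_std_normal)
  finally show "emeasure (gauss :: (real^'n) measure) (space gauss) = 1" .
qed


lemma ln_lower: assumes x: "0 \<le> (x::real)" shows "x - x\<^sup>2 / 2 \<le> ln (1 + x)"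
proof -
  let ?f = "\<lambda>x::real. ln (1 + x) - x + x\<^sup>2 / 2"
  have "?f 0 \<le> ?f x"
  proof (rule DERIV_nonneg_imp_nondecreasing[OF x])
    fix y :: real assume y: "0 \<le> y" "y \<le> x"
    have "DERIV ?f y :> (1 / (1 + y) - 1 + y)"
      using y by (auto intro!: derivative_eq_intros simp: power2_eq_square field_simps)
    moreover have "0 \<le> 1 / (1 + y) - 1 + y"
    proof -
      have "1 / (1 + y) - 1 + y = y\<^sup>2 / (1 + y)" using y by (simp add: field_simps power2_eq_square)
      then show ?thesis using y by simp
    qed
    ultimately show "\<exists>d. DERIV ?f y :> d \<and> 0 \<le> d" by blast
  qed
  then show ?thesis by simp
qed

lemma inv_sqrt_bound: assumes t: "0 \<le> (t::real)" shows "1 / sqrt (1 + 2 * t) \<le> exp (- t + t\<^sup>2)"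
proof -
  have "2 * t - (2 * t)\<^sup>2 / 2 \<le> ln (1 + 2 * t)" using ln_lower[of "2*t"] t by simp
  then have "exp (2 * (t - t\<^sup>2)) \<le> exp (ln (1 + 2 * t))"
    by (simp add: power2_eq_square algebra_simps)
  also have "\<dots> = 1 + 2 * t" using t by simp
  finally have h: "(exp (t - t\<^sup>2))\<^sup>2 \<le> 1 + 2 * t"
    by (simp add: power2_eq_square exp_add[symmetric] algebra_simps)
  have "exp (t - t\<^sup>2) \<le> sqrt (1 + 2 * t)"
    using real_le_rsqrt[OF h] .
  then have "1 / sqrt (1 + 2 * t) \<le> 1 / exp (t - t\<^sup>2)"
    using t by (intro divide_left_mono) (auto intro!: mult_pos_pos)
  also have "\<dots> = exp (- (t - t\<^sup>2))" by (metis exp_minus inverse_eq_divide)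
  also have "\<dots> = exp (- t + t\<^sup>2)" by simp
  finally show ?thesis .
qed

lemma std_normal_sq: "(\<integral>\<^sup>+y. ennreal (std_normal_density y) * ennreal (y\<^sup>2) \<partial>lborel) = 1"
proof -
  have hb: "has_bochner_integral lborel (\<lambda>x. std_normal_density x * x ^ (2 * 1)) (fact (2 * 1) / (2^1 * fact 1))"
    by (rule std_normal_moment_even)
  have "(\<integral>\<^sup>+y. ennreal (std_normal_density y * y\<^sup>2) \<partial>lborel) = ennreal 1"
    using hb by (subst nn_integral_eq_integrable) (auto simp: has_bochner_integral_iff)
  then show ?thesis by (simp add: ennreal_mult)
qed

lemma std_normal_mgf:
  assumes a: "0 \<le> (a::real)"
  shows "(\<integral>\<^sup>+y. ennreal (std_normal_density y) * ennreal (exp (- (a * y\<^sup>2))) \<partial>lborel) = ennreal (1 / sqrt (1 + 2 * a))"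
proof -
  define s where "s = 1 / sqrt (1 + 2 * a)"
  have s: "0 < s" using a by (simp add: s_def)
  have s2: "s\<^sup>2 = 1 / (1 + 2 * a)" using a by (simp add: s_def power_divide)
  have pt: "std_normal_density y * exp (- (a * y\<^sup>2)) = s * normal_density 0 s y" for y
  proof -
    have "normal_density 0 s y = 1 / sqrt (2 * pi * s\<^sup>2) * exp (- y\<^sup>2 / (2 * s\<^sup>2))"
      by (simp add: normal_density_def)
    also have "sqrt (2 * pi * s\<^sup>2) = sqrt (2 * pi) * s"
      using s by (simp add: real_sqrt_mult)
    also have "- y\<^sup>2 / (2 * s\<^sup>2) = - y\<^sup>2 / 2 + (- (a * y\<^sup>2))"
      using a by (simp add: s2 field_simps)
    finally have "s * normal_density 0 s y = 1 / sqrt (2 * pi) * exp (- y\<^sup>2 / 2 + (- (a * y\<^sup>2)))"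
      using s by (simp add: field_simps)
    then show ?thesis by (simp add: std_normal_density_def mult_exp_exp)
  qed
  have "(\<integral>\<^sup>+y. ennreal (std_normal_density y) * ennreal (exp (- (a * y\<^sup>2))) \<partial>lborel)
      = (\<integral>\<^sup>+y. ennreal s * ennreal (normal_density 0 s y) \<partial>lborel)"
    by (intro nn_integral_cong) (use s in \<open>simp add: ennreal_mult[symmetric] pt\<close>)
  also have "\<dots> = ennreal s * (\<integral>\<^sup>+y. ennreal (normal_density 0 s y) \<partial>lborel)"
    by (rule nn_integral_cmult) simp
  also have "\<dots> = ennreal s" using nn_integral_std_normal[OF s] by simp
  finally show ?thesis by (simp add: s_def)
qed

lemma gauss_sq: "(\<integral>\<^sup>+x. ennreal ((x $ k)\<^sup>2) \<partial>(gauss :: (real^'n) measure)) = 1"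
proof -
  have "(\<integral>\<^sup>+x. ennreal ((x $ k)\<^sup>2) \<partial>(gauss :: (real^'n) measure))
     = (\<integral>\<^sup>+x. (\<Prod>i\<in>UNIV. (\<lambda>i y. if i = k then ennreal (y\<^sup>2) else 1) i (x $ i)) \<partial>(gauss :: (real^'n) measure))"
    by (simp add: prod.delta)
  also have "\<dots> = (\<Prod>i\<in>UNIV. \<integral>\<^sup>+y. ennreal (std_normal_density y) * (\<lambda>i y. if i = k then ennreal (y\<^sup>2) else 1) i y \<partial>lborel)"
    by (rule gauss_prod) simp
  also have "\<dots> = (\<Prod>i\<in>UNIV. if i = k then 1 else (1::ennreal))"
    apply (intro prod.cong refl)
    subgoal for i by (cases "i = k") (simp_all add: std_normal_sq nn_integral_std_normal)
    done
  also have "\<dots> = 1" by simp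
  finally show ?thesis .
qed

lemma gauss_norm_sq:
  "integrable (gauss :: (real^'n) measure) (\<lambda>x. (norm x)\<^sup>2) \<and> (\<integral>x. (norm x)\<^sup>2 \<partial>(gauss :: (real^'n) measure)) = real CARD('n)"
proof -
  have "(\<integral>\<^sup>+x. ennreal ((norm x)\<^sup>2) \<partial>(gauss :: (real^'n) measure)) = (\<integral>\<^sup>+x. (\<Sum>k\<in>UNIV. ennreal ((x $ k)\<^sup>2)) \<partial>(gauss :: (real^'n) measure))"
    by (simp add: norm_sq_cart)
  also have "\<dots> = (\<Sum>k\<in>UNIV. \<integral>\<^sup>+x. ennreal ((x $ k)\<^sup>2) \<partial>(gauss :: (real^'n) measure))"
    by (rule nn_integral_sum) auto
  also have "\<dots> = ennreal (real CARD('n))" by (simp add: gauss_sq ennreal_of_nat_eq_real_of_nat)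
  finally show ?thesis
    by (subst (asm) nn_integral_eq_integrable) auto
qed

lemma gauss_diag_mgf:
  assumes c: "\<And>i. 0 \<le> c i"
  shows "(\<integral>\<^sup>+x. ennreal (exp (- (\<Sum>i\<in>UNIV. c i * (x $ i)\<^sup>2))) \<partial>(gauss :: (real^'n) measure))
       \<le> ennreal (exp (- (\<Sum>i\<in>UNIV. c i) + (\<Sum>i\<in>UNIV. (c i)\<^sup>2)))"
proof -
  have "(\<integral>\<^sup>+x. ennreal (exp (- (\<Sum>i\<in>UNIV. c i * (x $ i)\<^sup>2))) \<partial>(gauss :: (real^'n) measure))
     = (\<integral>\<^sup>+x. (\<Prod>i\<in>UNIV. (\<lambda>i y. ennreal (exp (- (c i * y\<^sup>2)))) i (x $ i)) \<partial>(gauss :: (real^'n) measure))"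
  proof (intro nn_integral_cong)
    fix x :: "real^'n"
    have "exp (- (\<Sum>i\<in>UNIV. c i * (x $ i)\<^sup>2)) = (\<Prod>i\<in>UNIV. exp (- (c i * (x $ i)\<^sup>2)))"
      by (simp add: exp_sum[symmetric] sum_negf)
    then show "ennreal (exp (- (\<Sum>i\<in>UNIV. c i * (x $ i)\<^sup>2))) = (\<Prod>i\<in>UNIV. (\<lambda>i y. ennreal (exp (- (c i * y\<^sup>2)))) i (x $ i))"
      by (simp add: prod_ennreal)
  qed
  also have "\<dots> = (\<Prod>i\<in>UNIV. \<integral>\<^sup>+y. ennreal (std_normal_density y) * (\<lambda>i y. ennreal (exp (- (c i * y\<^sup>2)))) i y \<partial>lborel)"
    by (rule gauss_prod) simp
  also have "\<dots> = (\<Prod>i\<in>UNIV. ennreal (1 / sqrt (1 + 2 * c i)))"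
    by (intro prod.cong refl) (simp add: std_normal_mgf c)
  also have "\<dots> = ennreal (\<Prod>i\<in>UNIV. 1 / sqrt (1 + 2 * c i))"
    by (rule prod_ennreal) (use c in auto)
  also have "\<dots> \<le> ennreal (\<Prod>i\<in>UNIV. exp (- c i + (c i)\<^sup>2))"
    by (intro ennreal_leI prod_mono) (use c inv_sqrt_bound in auto)
  also have "(\<Prod>i\<in>UNIV. exp (- c i + (c i)\<^sup>2)) = exp (- (\<Sum>i\<in>UNIV. c i) + (\<Sum>i\<in>UNIV. (c i)\<^sup>2))"
    by (simp add: exp_sum[symmetric] sum.distrib sum_negf sum_subtractf)
  finally show ?thesis .
qed

lemma sym_inner:
  fixes A :: "real^'n^'n"
  assumes "transpose A = A"
  shows "x \<bullet> (A *v y) = (A *v x) \<bullet> y"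
proof -
  have "x \<bullet> (A *v y) = (\<Sum>i\<in>UNIV. \<Sum>j\<in>UNIV. x $ i * A $ i $ j * y $ j)"
    by (simp add: inner_vec_def matrix_vector_mult_def sum_distrib_left mult.assoc)
  also have "\<dots> = (\<Sum>j\<in>UNIV. \<Sum>i\<in>UNIV. x $ i * A $ i $ j * y $ j)"
    by (rule sum.swap)
  also have "\<dots> = (\<Sum>j\<in>UNIV. \<Sum>i\<in>UNIV. A $ j $ i * x $ i * y $ j)"
  proof -
    have "A $ i $ j = A $ j $ i" for i j using assms by (metis transpose_def vec_lambda_beta)
    then show ?thesis by (intro sum.cong refl) (simp add: mult.commute)
  qed
  also have "\<dots> = (A *v x) \<bullet> y"
    by (simp add: inner_vec_def matrix_vector_mult_def sum_distrib_right)
  finally show ?thesis .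
qed

lemma max_eig:
  fixes A :: "real^'n^'n"
  assumes sym: "transpose A = A"
    and W: "\<And>y. y \<in> W \<Longrightarrow> A *v y \<in> W" "\<And>y z c. y \<in> W \<Longrightarrow> z \<in> W \<Longrightarrow> y + c *\<^sub>R z \<in> W"
    and v: "v \<in> W" "norm v = 1"
    and mx: "\<And>y. y \<in> W \<Longrightarrow> y \<bullet> (A *v y) \<le> (v \<bullet> (A *v v)) * (norm y)\<^sup>2"
  shows "A *v v = (v \<bullet> (A *v v)) *\<^sub>R v"
proof -
  define l where "l = v \<bullet> (A *v v)"
  define r where "r = A *v v - l *\<^sub>R v"
  have vv: "v \<bullet> v = 1" using v(2) by (simp add: norm_eq_1)
  have rW: "r \<in> W" unfolding r_def using W(2)[OF W(1)[OF v(1)] v(1), of "-l"] by simp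
  have rv: "r \<bullet> v = 0" unfolding r_def l_def using vv by (simp add: inner_diff_left inner_commute[of "A *v v" v])
  have rAv: "r \<bullet> (A *v v) = r \<bullet> r"
    unfolding r_def by (simp add: inner_diff_left inner_diff_right l_def inner_commute vv algebra_simps)
  have key: "2 * e * (r \<bullet> r) + e\<^sup>2 * (r \<bullet> (A *v r) - l * (r \<bullet> r)) \<le> 0" for e :: real
  proof -
    have yW: "v + e *\<^sub>R r \<in> W" using W(2)[OF v(1) rW] .
    have n2: "(norm (v + e *\<^sub>R r))\<^sup>2 = 1 + e\<^sup>2 * (r \<bullet> r)"
      using rv unfolding power2_norm_eq_inner
      by (simp add: inner_add_left inner_add_right vv inner_commute[of v r] power2_eq_square)
    have vAr: "v \<bullet> (A *v r) = r \<bullet> r"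
      using sym_inner[OF sym, of v r] rAv by (simp add: inner_commute)
    have q: "(v + e *\<^sub>R r) \<bullet> (A *v (v + e *\<^sub>R r)) = l + 2 * e * (r \<bullet> r) + e\<^sup>2 * (r \<bullet> (A *v r))"
      by (simp add: matrix_vector_right_distrib matrix_vector_mult_scaleR inner_add_left inner_add_right
          l_def rAv vAr power2_eq_square algebra_simps)
    from mx[OF yW] show ?thesis unfolding q n2 l_def[symmetric] by (simp add: algebra_simps)
  qed
  have "r \<bullet> r = 0"
  proof (rule ccontr)
    assume ne: "r \<bullet> r \<noteq> 0"
    then have pos: "0 < r \<bullet> r" using inner_ge_zero[of r] by linarith
    define C where "C = \<bar>r \<bullet> (A *v r) - l * (r \<bullet> r)\<bar> + 1"
    have C: "0 < C" by (simp add: C_def add_pos_nonneg)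
    define e where "e = (r \<bullet> r) / C"
    have e: "0 < e" using pos C by (simp add: e_def)
    define K where "K = r \<bullet> (A *v r) - l * (r \<bullet> r)"
    have "e * (2 * (r \<bullet> r) + e * K) \<le> 0"
      using key[of e] unfolding K_def by (simp add: power2_eq_square algebra_simps)
    then have "2 * (r \<bullet> r) + e * (r \<bullet> (A *v r) - l * (r \<bullet> r)) \<le> 0"
      using e unfolding K_def[symmetric] by (simp add: mult_le_0_iff)
    moreover have "e * (r \<bullet> (A *v r) - l * (r \<bullet> r)) \<ge> - (e * C)"
    proof -
      have "- C \<le> r \<bullet> (A *v r) - l * (r \<bullet> r)" by (simp add: C_def)
      then show ?thesis using e by (metis mult_left_mono less_imp_le mult_minus_right)
    qed
    moreover have "e * C = r \<bullet> r" using C by (simp add: e_def)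
    ultimately show False using pos by linarith
  qed
  then have "r = 0" by simp
  then show ?thesis unfolding r_def l_def by simp
qed


definition eigset :: "real^'n^'n \<Rightarrow> (real^'n) set \<Rightarrow> bool" where
  "eigset A B \<longleftrightarrow> (\<forall>b\<in>B. norm b = 1 \<and> (\<exists>l. A *v b = l *\<^sub>R b)) \<and> pairwise orthogonal B"

lemma eigset_indep:
  assumes "eigset A (B :: (real^'n) set)"
  shows "independent B" "finite B" "card B \<le> CARD('n)"
proof -
  have "0 \<notin> B" using assms by (auto simp: eigset_def)
  then show ind: "independent B" using assms pairwise_orthogonal_independent by (auto simp: eigset_def)
  show "finite B" "card B \<le> CARD('n)" using independent_bound[OF ind] by auto
qed

lemma eig_exists_perp:
  fixes A :: "real^'n^'n"
  assumes sym: "transpose A = A" and eB: "eigset A B"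
    and x: "x \<noteq> 0" "\<forall>b\<in>B. b \<bullet> x = 0"
  shows "\<exists>v. norm v = 1 \<and> (\<forall>b\<in>B. b \<bullet> v = 0) \<and> (\<exists>l. A *v v = l *\<^sub>R v)"
proof -
  define W where "W = {y. \<forall>b\<in>B. b \<bullet> y = 0}"
  have Winv: "A *v y \<in> W" if "y \<in> W" for y
  proof -
    have "b \<bullet> (A *v y) = 0" if b: "b \<in> B" for b
    proof -
      obtain l where l: "A *v b = l *\<^sub>R b" using eB b by (auto simp: eigset_def)
      have "b \<bullet> (A *v y) = (A *v b) \<bullet> y" by (rule sym_inner[OF sym])
      also have "\<dots> = l * (b \<bullet> y)" by (simp add: l)
      also have "\<dots> = 0" using \<open>y \<in> W\<close> b by (simp add: W_def)
      finally show ?thesis .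
    qed
    then show ?thesis by (simp add: W_def)
  qed
  have Wlin: "y + c *\<^sub>R z \<in> W" if "y \<in> W" "z \<in> W" for y z c
    using that by (simp add: W_def inner_add_right)
  have Wsc: "c *\<^sub>R z \<in> W" if "z \<in> W" for z c
    using that by (simp add: W_def)
  define K where "K = W \<inter> sphere 0 1"
  have cW: "closed W"
  proof -
    have "W = (\<Inter>b\<in>B. {y. b \<bullet> y = 0})" by (auto simp: W_def)
    then show ?thesis by (auto intro!: closed_INT closed_hyperplane)
  qed
  have cK: "compact K" unfolding K_def using cW compact_sphere by (metis compact_Int_closed inf_commute)
  have xW: "x /\<^sub>R norm x \<in> K" using x by (simp add: K_def W_def)
  have cont: "continuous_on K (\<lambda>y. y \<bullet> (A *v y))"
    by (intro continuous_intros)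
  obtain v where vK: "v \<in> K" and vmax: "\<And>y. y \<in> K \<Longrightarrow> y \<bullet> (A *v y) \<le> v \<bullet> (A *v v)"
    using continuous_attains_sup[OF cK _ cont] xW by blast
  have vW: "v \<in> W" and vn: "norm v = 1" using vK by (auto simp: K_def)
  have mx: "y \<bullet> (A *v y) \<le> (v \<bullet> (A *v v)) * (norm y)\<^sup>2" if yW: "y \<in> W" for y
  proof (cases "y = 0")
    case True then show ?thesis by simp
  next
    case False
    then have ny: "0 < norm y" by simp
    have "(y /\<^sub>R norm y) \<in> K" using Wsc[OF yW] False by (simp add: K_def)
    then have "(y /\<^sub>R norm y) \<bullet> (A *v (y /\<^sub>R norm y)) \<le> v \<bullet> (A *v v)" by (rule vmax)
    moreover have "(y /\<^sub>R norm y) \<bullet> (A *v (y /\<^sub>R norm y)) = (y \<bullet> (A *v y)) / (norm y)\<^sup>2"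
      using ny by (simp add: matrix_vector_mult_scaleR power2_eq_square field_simps)
    ultimately show ?thesis using ny by (simp add: divide_le_eq mult.commute)
  qed
  have "A *v v = (v \<bullet> (A *v v)) *\<^sub>R v"
    by (rule max_eig[OF sym Winv Wlin vW vn mx])
  then show ?thesis using vW vn by (auto simp: W_def)
qed

lemma spectral_set:
  fixes A :: "real^'n^'n"
  assumes sym: "transpose A = A"
  shows "\<exists>B. eigset A B \<and> (\<forall>x. x = (\<Sum>b\<in>B. (b \<bullet> x) *\<^sub>R b))"
proof -
  have "\<exists>B. eigset A B \<and> (\<forall>B'. eigset A B' \<longrightarrow> card B' \<le> card B)"
  proof (rule ex_has_greatest_nat[where k="{}" and b="Suc CARD('n)"])
    show "eigset A {}" by (simp add: eigset_def)
    show "\<forall>y. eigset A y \<longrightarrow> card y < Suc CARD('n)"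
      using eigset_indep(3)[of A] by (simp add: le_imp_less_Suc)
  qed
  then obtain B where eB: "eigset A B" and mx: "\<And>B'. eigset A B' \<Longrightarrow> card B' \<le> card B" by blast
  have fB: "finite B" using eigset_indep[OF eB] by simp
  have orth: "b \<bullet> c = (if b = c then 1 else 0)" if "b \<in> B" "c \<in> B" for b c
    using eB that by (auto simp: eigset_def pairwise_def orthogonal_def norm_eq_1)
  have "x = (\<Sum>b\<in>B. (b \<bullet> x) *\<^sub>R b)" for x
  proof (rule ccontr)
    assume ne: "x \<noteq> (\<Sum>b\<in>B. (b \<bullet> x) *\<^sub>R b)"
    define z where "z = x - (\<Sum>b\<in>B. (b \<bullet> x) *\<^sub>R b)"
    have z0: "z \<noteq> 0" using ne by (simp add: z_def)
    have zperp: "\<forall>c\<in>B. c \<bullet> z = 0"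
    proof
      fix c assume c: "c \<in> B"
      have "c \<bullet> (\<Sum>b\<in>B. (b \<bullet> x) *\<^sub>R b) = (\<Sum>b\<in>B. (b \<bullet> x) * (c \<bullet> b))"
        by (simp add: inner_sum_right)
      also have "\<dots> = (\<Sum>b\<in>B. if b = c then c \<bullet> x else 0)"
        by (intro sum.cong refl) (use c orth in auto)
      also have "\<dots> = c \<bullet> x" using c fB by simp
      finally show "c \<bullet> z = 0" by (simp add: z_def inner_diff_right)
    qed
    obtain v l where v: "norm v = 1" "\<forall>b\<in>B. b \<bullet> v = 0" "A *v v = l *\<^sub>R v"
      using eig_exists_perp[OF sym eB z0 zperp] by blast
    have vB: "v \<notin> B" using v by (metis inner_eq_zero_iff norm_zero zero_neq_one)
    have "eigset A (insert v B)"
      using eB v by (auto simp: eigset_def pairwise_insert orthogonal_def inner_commute)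
    then have "card (insert v B) \<le> card B" by (rule mx)
    then show False using vB fB by simp
  qed
  then show ?thesis using eB by blast
qed

lemma orth_sum_inner:
  fixes f :: "'n::finite \<Rightarrow> real^'m"
  assumes "\<And>i j. f i \<bullet> f j = (if i = j then 1 else 0)"
  shows "(\<Sum>i\<in>UNIV. c i *\<^sub>R f i) \<bullet> (\<Sum>j\<in>UNIV. e j *\<^sub>R f j) = (\<Sum>i\<in>UNIV. c i * e i)"
proof -
  have "(\<Sum>i\<in>UNIV. c i *\<^sub>R f i) \<bullet> (\<Sum>j\<in>UNIV. e j *\<^sub>R f j) = (\<Sum>i\<in>UNIV. c i * (f i \<bullet> (\<Sum>j\<in>UNIV. e j *\<^sub>R f j)))"
    by (simp add: inner_sum_left)
  also have "\<dots> = (\<Sum>i\<in>UNIV. c i * e i)"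
  proof (intro sum.cong refl)
    fix i
    have "f i \<bullet> (\<Sum>j\<in>UNIV. e j *\<^sub>R f j) = (\<Sum>j\<in>UNIV. e j * (f i \<bullet> f j))"
      by (simp add: inner_sum_right)
    also have "\<dots> = (\<Sum>j\<in>UNIV. if i = j then e j else 0)"
      by (intro sum.cong refl) (simp add: assms)
    also have "\<dots> = e i" by simp
    finally show "c i * (f i \<bullet> (\<Sum>j\<in>UNIV. e j *\<^sub>R f j)) = c i * e i" by simp
  qed
  finally show ?thesis .
qed

lemma spectral:
  fixes A :: "real^'n^'n"
  assumes sym: "transpose A = A"
  obtains P :: "real^'n^'n" and d :: "'n \<Rightarrow> real"
  where "orthogonal_matrix P"
    "\<And>x. x \<bullet> (A *v x) = (\<Sum>i\<in>UNIV. d i * ((P *v x) $ i)\<^sup>2)"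
    "trace A = (\<Sum>i\<in>UNIV. d i)"
    "(\<Sum>i\<in>UNIV. \<Sum>j\<in>UNIV. (A $ i $ j)\<^sup>2) = (\<Sum>i\<in>UNIV. (d i)\<^sup>2)"
proof -
  obtain B where eB: "eigset A B" and exp: "\<And>x. x = (\<Sum>b\<in>B. (b \<bullet> x) *\<^sub>R b)"
    using spectral_set[OF sym] by blast
  have ind: "independent B" and fB: "finite B" using eigset_indep[OF eB] by auto
  have "span B = UNIV"
  proof -
    have "x \<in> span B" for x
      by (subst exp[of x]) (intro span_sum span_scale span_base)
    then show ?thesis by auto
  qed
  then have "card B = CARD('n)"
    using dim_eq_card_independent[OF ind] dim_span[of B] by simp
  then obtain f where f: "bij_betw f (UNIV :: 'n set) B"
    using finite_same_card_bij[of "UNIV::'n set" B] fB \<open>card B = CARD('n)\<close> by auto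
  have orth: "f i \<bullet> f j = (if i = j then 1 else 0)" for i j
  proof -
    have "f i \<in> B" "f j \<in> B" using f by (auto simp: bij_betw_def)
    moreover have "f i = f j \<longleftrightarrow> i = j" using f by (auto simp: bij_betw_def inj_on_def)
    ultimately show ?thesis using eB by (auto simp: eigset_def pairwise_def orthogonal_def norm_eq_1)
  qed
  define d where "d i = f i \<bullet> (A *v f i)" for i
  have eig: "A *v f i = d i *\<^sub>R f i" for i
  proof -
    obtain l where l: "A *v f i = l *\<^sub>R f i" using eB f by (auto simp: eigset_def bij_betw_def)
    have "d i = l" using orth[of i i] by (simp add: d_def l)
    then show ?thesis using l by simp
  qed
  have expf: "x = (\<Sum>i\<in>UNIV. (f i \<bullet> x) *\<^sub>R f i)" for x
    using exp[of x] sum.reindex_bij_betw[OF f, of "\<lambda>b. (b \<bullet> x) *\<^sub>R b"] by simp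
  have Aexp: "A *v x = (\<Sum>i\<in>UNIV. (d i * (f i \<bullet> x)) *\<^sub>R f i)" for x
  proof -
    have "A *v x = A *v (\<Sum>i\<in>UNIV. (f i \<bullet> x) *\<^sub>R f i)" using expf[of x] by simp
    also have "\<dots> = (\<Sum>i\<in>UNIV. (f i \<bullet> x) *\<^sub>R (A *v f i))"
      by (simp add: linear_sum[OF matrix_vector_mul_linear] matrix_vector_mult_scaleR o_def)
    finally show ?thesis by (simp add: eig mult.commute)
  qed
  define P :: "real^'n^'n" where "P = (\<chi> i. f i)"
  have Px: "(P *v x) $ i = f i \<bullet> x" for x i
    by (simp add: P_def matrix_vector_mult_def inner_vec_def)
  have oP: "orthogonal_matrix P"
    unfolding orthogonal_matrix_orthonormal_rows
    using orth by (auto simp: P_def row_def norm_eq_1 orthogonal_def)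
  have qf: "x \<bullet> (A *v x) = (\<Sum>i\<in>UNIV. d i * ((P *v x) $ i)\<^sup>2)" for x
    by (simp add: Aexp inner_sum_right Px power2_eq_square inner_commute mult.assoc)
  have fk: "f i \<bullet> axis k 1 = f i $ k" for i k by (simp add: inner_axis)
  have ff: "(\<Sum>k\<in>UNIV. (f i $ k)\<^sup>2) = 1" for i
    using orth[of i i] by (simp add: inner_vec_def power2_eq_square)
  have tr: "trace A = (\<Sum>i\<in>UNIV. d i)"
  proof -
    have "trace A = (\<Sum>k\<in>UNIV. (A *v axis k 1) $ k)"
      by (simp add: trace_def matrix_vector_mult_basis column_def)
    also have "\<dots> = (\<Sum>k\<in>UNIV. \<Sum>i\<in>UNIV. d i * (f i $ k)\<^sup>2)"
      by (simp add: Aexp fk power2_eq_square mult.assoc)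
    also have "\<dots> = (\<Sum>i\<in>UNIV. d i * (\<Sum>k\<in>UNIV. (f i $ k)\<^sup>2))"
      by (subst sum.swap) (simp add: sum_distrib_left)
    also have "\<dots> = (\<Sum>i\<in>UNIV. d i)" by (simp add: ff)
    finally show ?thesis .
  qed
  have fr: "(\<Sum>i\<in>UNIV. \<Sum>j\<in>UNIV. (A $ i $ j)\<^sup>2) = (\<Sum>i\<in>UNIV. (d i)\<^sup>2)"
  proof -
    have "(\<Sum>i\<in>UNIV. \<Sum>j\<in>UNIV. (A $ i $ j)\<^sup>2) = (\<Sum>j\<in>UNIV. \<Sum>i\<in>UNIV. (A $ i $ j)\<^sup>2)"
      by (rule sum.swap)
    also have "\<dots> = (\<Sum>j\<in>UNIV. (A *v axis j 1) \<bullet> (A *v axis j 1))"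
      by (simp add: matrix_vector_mult_basis column_def inner_vec_def power2_eq_square)
    also have "\<dots> = (\<Sum>j\<in>UNIV. \<Sum>i\<in>UNIV. (d i * f i $ j) * (d i * f i $ j))"
      by (simp only: Aexp fk orth_sum_inner[OF orth])
    also have "\<dots> = (\<Sum>i\<in>UNIV. (d i)\<^sup>2 * (\<Sum>j\<in>UNIV. (f i $ j)\<^sup>2))"
      by (subst sum.swap) (simp add: sum_distrib_left power2_eq_square algebra_simps)
    also have "\<dots> = (\<Sum>i\<in>UNIV. (d i)\<^sup>2)" by (simp add: ff)
    finally show ?thesis .
  qed
  show thesis using that[OF oP qf tr fr] .
qed


definition frobsq :: "real^'n^'n \<Rightarrow> real" where
  "frobsq A = (\<Sum>i\<in>UNIV. \<Sum>j\<in>UNIV. (A $ i $ j)\<^sup>2)"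

lemma gauss_qf_mgf:
  fixes Q :: "real^'n^'n"
  assumes Q: "psd_matrix Q" and mu: "0 \<le> mu"
  shows "(\<integral>\<^sup>+x. ennreal (exp (- mu * (x \<bullet> (Q *v x)))) \<partial>(gauss :: (real^'n) measure))
    \<le> ennreal (exp (- mu * trace Q + mu\<^sup>2 * frobsq Q))"
proof -
  have sym: "transpose Q = Q" using Q by (simp add: psd_matrix_def)
  obtain P d where oP: "orthogonal_matrix P"
    and qf: "\<And>x. x \<bullet> (Q *v x) = (\<Sum>i\<in>UNIV. d i * ((P *v x) $ i)\<^sup>2)"
    and tr: "trace Q = (\<Sum>i\<in>UNIV. d i)"
    and fr: "(\<Sum>i\<in>UNIV. \<Sum>j\<in>UNIV. (Q $ i $ j)\<^sup>2) = (\<Sum>i\<in>UNIV. (d i)\<^sup>2)"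
    using spectral[OF sym] by blast
  have dpos: "0 \<le> d i" for i
  proof -
    have PPt: "P ** transpose P = mat 1" using oP by (simp add: orthogonal_matrix_def)
    have e: "P *v (transpose P *v axis i 1) = axis i 1"
      by (metis PPt matrix_vector_mul_assoc matrix_vector_mul_lid)
    have ax: "d k * (axis i (1::real) $ k)\<^sup>2 = (if k = i then d i else 0)" for k
      by (simp add: axis_def)
    have "(transpose P *v axis i 1) \<bullet> (Q *v (transpose P *v axis i 1)) = (\<Sum>k\<in>UNIV. d k * (axis i (1::real) $ k)\<^sup>2)"
      by (simp only: qf e)
    also have "\<dots> = d i" by (simp add: ax)
    finally have "(transpose P *v axis i 1) \<bullet> (Q *v (transpose P *v axis i 1)) = d i" .
    moreover have "0 \<le> (transpose P *v axis i 1) \<bullet> (Q *v (transpose P *v axis i 1))"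
      using Q by (simp add: psd_matrix_def)
    ultimately show ?thesis by simp
  qed
  define g where "g y = ennreal (exp (- (\<Sum>i\<in>UNIV. (mu * d i) * (y $ i)\<^sup>2)))" for y :: "real^'n"
  have gm[measurable]: "g \<in> borel_measurable borel" unfolding g_def by measurable
  have "(\<integral>\<^sup>+x. ennreal (exp (- mu * (x \<bullet> (Q *v x)))) \<partial>(gauss :: (real^'n) measure))
      = (\<integral>\<^sup>+x. g (P *v x) \<partial>gauss)"
    by (intro nn_integral_cong) (simp add: g_def qf sum_distrib_left mult.assoc sum_negf)
  also have "\<dots> = (\<integral>\<^sup>+x. g x \<partial>gauss)" by (rule gauss_orth[OF oP gm])
  also have "\<dots> \<le> ennreal (exp (- (\<Sum>i\<in>UNIV. mu * d i) + (\<Sum>i\<in>UNIV. (mu * d i)\<^sup>2)))"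
    unfolding g_def by (rule gauss_diag_mgf) (use mu dpos in \<open>simp add: sum_negf\<close>)
  also have "\<dots> = ennreal (exp (- mu * trace Q + mu\<^sup>2 * frobsq Q))"
    by (simp add: tr frobsq_def fr sum_distrib_left power_mult_distrib sum_negf)
  finally show ?thesis .
qed

lemma cont_mm: "continuous_on S (\<lambda>x. f x ** (g x :: real^'n^'n)) \<or> \<not> continuous_on S f \<or> \<not> continuous_on S g"
  for f :: "'a::topological_space \<Rightarrow> real^'n^'n"
proof -
  { assume f: "continuous_on S f" and g: "continuous_on S g"
    have "continuous_on S (\<lambda>x. \<chi> i j. \<Sum>k\<in>UNIV. f x $ i $ k * g x $ k $ j)"
      by (intro continuous_intros f g)
    then have "continuous_on S (\<lambda>x. f x ** g x)" by (simp add: matrix_matrix_mult_def) }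
  then show ?thesis by blast
qed

lemma continuous_on_mm[continuous_intros]:
  fixes f g :: "'a::topological_space \<Rightarrow> real^'n^'n"
  shows "continuous_on S f \<Longrightarrow> continuous_on S g \<Longrightarrow> continuous_on S (\<lambda>x. f x ** g x)"
  using cont_mm[of S f g] by blast

lemma continuous_on_transpose[continuous_intros]:
  fixes f :: "'a::topological_space \<Rightarrow> real^'n^'m"
  shows "continuous_on S f \<Longrightarrow> continuous_on S (\<lambda>x. transpose (f x))"
  unfolding transpose_def by (intro continuous_intros)

lemma continuous_on_mv[continuous_intros]:
  fixes f :: "'a::topological_space \<Rightarrow> real^'n^'m"
  shows "continuous_on S f \<Longrightarrow> continuous_on S g \<Longrightarrow> continuous_on S (\<lambda>x. f x *v g x)"
  unfolding matrix_vector_mult_def by (intro continuous_intros)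

lemma continuous_on_column[continuous_intros]:
  fixes f :: "'a::topological_space \<Rightarrow> real^'n^'m"
  shows "continuous_on S f \<Longrightarrow> continuous_on S (\<lambda>x. column j (f x))"
  unfolding column_def by (intro continuous_intros)

lemma cont_meas:
  fixes M :: "'a::topological_space measure"
  assumes "sets M = sets borel" "continuous_on UNIV f"
  shows "f \<in> borel_measurable M"
proof -
  have "f \<in> borel_measurable borel" using assms(2) by (rule borel_measurable_continuous_onI)
  then show ?thesis by (subst measurable_cong_sets[OF assms(1) refl])
qed

lemma cont_meas_pair:
  fixes M :: "'a::second_countable_topology measure" and N :: "'b::second_countable_topology measure"
  assumes "sets M = sets borel" "sets N = sets borel" "continuous_on UNIV f"
  shows "f \<in> borel_measurable (M \<Otimes>\<^sub>M N)"
proof -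
  have "sets (M \<Otimes>\<^sub>M N) = sets (borel \<Otimes>\<^sub>M borel)" using assms(1,2) by (rule sets_pair_measure_cong)
  also have "\<dots> = sets borel" by (simp only: borel_prod)
  finally show ?thesis by (rule cont_meas) (rule assms(3))
qed

locale haar =
  fixes M :: "(real^'n^'n) measure"
  assumes H: "haar_orthogonal M"
begin

lemma sets_M[measurable_cong]: "sets M = sets borel" using H by (simp add: haar_orthogonal_def)
lemma space_M[simp]: "space M = UNIV" using sets_eq_imp_space_eq[OF sets_M] by simp

sublocale prob_space M using H by (simp add: haar_orthogonal_def)

lemma AE_orth: "AE U in M. orthogonal_matrix U"
proof -
  have "emeasure M {U. orthogonal_matrix U} = 1" using H by (simp add: haar_orthogonal_def)
  then have "prob {U. orthogonal_matrix U} = 1" by (simp add: emeasure_eq_measure)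
  then have "AE U in M. U \<in> {U. orthogonal_matrix U}" by (rule AE_prob_1)
  then show ?thesis by simp
qed

lemma left_inv:
  assumes A: "orthogonal_matrix A" and f: "f \<in> borel_measurable borel"
  shows "(\<integral>\<^sup>+U. f (A ** U) \<partial>M) = (\<integral>\<^sup>+U. f U \<partial>M)"
proof -
  have mA: "(\<lambda>U. A ** U) \<in> M \<rightarrow>\<^sub>M borel"
    by (rule cont_meas[OF sets_M]) (intro continuous_intros)
  have "(\<integral>\<^sup>+U. f U \<partial>M) = (\<integral>\<^sup>+U. f U \<partial>(distr M borel (\<lambda>U. A ** U)))"
    using H A by (simp add: haar_orthogonal_def)
  also have "\<dots> = (\<integral>\<^sup>+U. f (A ** U) \<partial>M)"
    by (rule nn_integral_distr[OF mA]) (use f in simp)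
  finally show ?thesis by simp
qed

lemma transpose_inv:
  assumes f: "f \<in> borel_measurable borel"
  shows "(\<integral>\<^sup>+U. f (transpose U) \<partial>M) = (\<integral>\<^sup>+U. f U \<partial>M)"
proof -
  interpret pair_sigma_finite M M by unfold_locales
  have fT: "(\<lambda>U. f (transpose U)) \<in> borel_measurable borel"
    using f by (rule measurable_compose[rotated]) (intro borel_measurable_continuous_onI continuous_intros)
  define F where "F = (\<lambda>(X::real^'n^'n, Y::real^'n^'n). f (transpose Y ** X))"
  have Fm: "F \<in> borel_measurable (M \<Otimes>\<^sub>M M)"
  proof -
    have "(\<lambda>p::(real^'n^'n) \<times> (real^'n^'n). transpose (snd p) ** fst p) \<in> borel_measurable (M \<Otimes>\<^sub>M M)"
      by (rule cont_meas_pair[OF sets_M sets_M]) (intro continuous_intros)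
    then have "(\<lambda>p. f (transpose (snd p) ** fst p)) \<in> borel_measurable (M \<Otimes>\<^sub>M M)"
      using f by (rule measurable_compose)
    then show ?thesis by (simp add: F_def case_prod_beta')
  qed
  have "(\<integral>\<^sup>+Y. (\<integral>\<^sup>+X. F (X, Y) \<partial>M) \<partial>M) = (\<integral>\<^sup>+X. (\<integral>\<^sup>+Y. F (X, Y) \<partial>M) \<partial>M)"
    by (rule Fubini[OF Fm])
  moreover have "(\<integral>\<^sup>+Y. (\<integral>\<^sup>+X. F (X, Y) \<partial>M) \<partial>M) = (\<integral>\<^sup>+Y. (\<integral>\<^sup>+X. f X \<partial>M) \<partial>M)"
  proof (rule nn_integral_cong_AE)
    show "AE Y in M. (\<integral>\<^sup>+X. F (X, Y) \<partial>M) = (\<integral>\<^sup>+X. f X \<partial>M)"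
      using AE_orth
    proof (rule AE_mp, intro AE_I2 impI)
      fix Y :: "real^'n^'n" assume "orthogonal_matrix Y"
      then show "(\<integral>\<^sup>+X. F (X, Y) \<partial>M) = (\<integral>\<^sup>+X. f X \<partial>M)"
        unfolding F_def using left_inv[OF _ f, of "transpose Y"] by simp
    qed
  qed
  moreover have "(\<integral>\<^sup>+X. (\<integral>\<^sup>+Y. F (X, Y) \<partial>M) \<partial>M) = (\<integral>\<^sup>+X. (\<integral>\<^sup>+Y. f (transpose Y) \<partial>M) \<partial>M)"
  proof (rule nn_integral_cong_AE)
    show "AE X in M. (\<integral>\<^sup>+Y. F (X, Y) \<partial>M) = (\<integral>\<^sup>+Y. f (transpose Y) \<partial>M)"
      using AE_orth
    proof (rule AE_mp, intro AE_I2 impI)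
      fix X :: "real^'n^'n" assume X: "orthogonal_matrix X"
      have "(\<integral>\<^sup>+Y. F (X, Y) \<partial>M) = (\<integral>\<^sup>+Y. (\<lambda>U. f (transpose U)) (transpose X ** Y) \<partial>M)"
        unfolding F_def by (simp add: matrix_transpose_mul)
      also have "\<dots> = (\<integral>\<^sup>+Y. f (transpose Y) \<partial>M)"
        using X by (intro left_inv[OF _ fT]) simp
      finally show "(\<integral>\<^sup>+Y. F (X, Y) \<partial>M) = (\<integral>\<^sup>+Y. f (transpose Y) \<partial>M)" .
    qed
  qed
  ultimately have "(\<integral>\<^sup>+Y. (\<integral>\<^sup>+X. f X \<partial>M) \<partial>M) = (\<integral>\<^sup>+X. (\<integral>\<^sup>+Y. f (transpose Y) \<partial>M) \<partial>M)"
    by simp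
  moreover have "emeasure M UNIV = 1" using emeasure_space_1 by simp
  ultimately show ?thesis by simp
qed

lemma right_inv:
  assumes B: "orthogonal_matrix B" and f: "f \<in> borel_measurable borel"
  shows "(\<integral>\<^sup>+U. f (U ** B) \<partial>M) = (\<integral>\<^sup>+U. f U \<partial>M)"
proof -
  define G where "G V = f (transpose V ** B)" for V
  have Gm: "G \<in> borel_measurable borel"
    unfolding G_def using f by (rule measurable_compose[rotated]) (intro borel_measurable_continuous_onI continuous_intros)
  have "(\<integral>\<^sup>+U. f (U ** B) \<partial>M) = (\<integral>\<^sup>+U. G (transpose U) \<partial>M)"
    by (simp add: G_def)
  also have "\<dots> = (\<integral>\<^sup>+U. G U \<partial>M)" by (rule transpose_inv[OF Gm])
  also have "\<dots> = (\<integral>\<^sup>+U. (\<lambda>V. f (transpose V)) (transpose B ** U) \<partial>M)"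
    by (simp add: G_def matrix_transpose_mul)
  also have "\<dots> = (\<integral>\<^sup>+U. f (transpose U) \<partial>M)"
  proof (rule left_inv)
    show "orthogonal_matrix (transpose B)" using B by simp
    show "(\<lambda>V. f (transpose V)) \<in> borel_measurable borel"
      using f by (rule measurable_compose[rotated]) (intro borel_measurable_continuous_onI continuous_intros)
  qed
  also have "\<dots> = (\<integral>\<^sup>+U. f U \<partial>M)" by (rule transpose_inv[OF f])
  finally show ?thesis .
qed

end

lemma jensen_gauss:
  assumes a: "0 \<le> a"
  shows "ennreal (exp (- a)) \<le> (\<integral>\<^sup>+w. ennreal (exp (- a * ((norm w)\<^sup>2 / real CARD('n)))) \<partial>(gauss :: (real^'n) measure))"
proof -
  interpret G: prob_space "gauss :: (real^'n) measure" by (rule prob_space_gauss)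
  define N where "N = real CARD('n)"
  have N: "0 < N" by (simp add: N_def)
  define c where "c w = (norm w)\<^sup>2 / N" for w :: "real^'n"
  have ni: "integrable (gauss :: (real^'n) measure) (\<lambda>w. (norm w)\<^sup>2)"
    and nint: "(\<integral>w. (norm w)\<^sup>2 \<partial>(gauss :: (real^'n) measure)) = N"
    using gauss_norm_sq[where 'n='n] by (auto simp: N_def)
  have ci: "integrable gauss c" unfolding c_def using ni by (rule integrable_divide_zero)
  have cint: "(\<integral>w. c w \<partial>(gauss :: (real^'n) measure)) = 1"
    unfolding c_def using nint N by simp
  have cm[measurable]: "c \<in> borel_measurable (gauss :: (real^'n) measure)"
    using ci by (rule borel_measurable_integrable)
  have cpos: "0 \<le> c w" for w using N by (simp add: c_def)
  define g where "g w = exp (- a * c w)" for w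
  have gm: "g \<in> borel_measurable (gauss :: (real^'n) measure)" unfolding g_def by measurable
  have gi: "integrable (gauss :: (real^'n) measure) g"
  proof (rule G.integrable_const_bound[where B=1])
    show "AE x in gauss. norm (g x) \<le> 1" using a cpos by (auto simp: g_def intro!: AE_I2 mult_nonneg_nonneg)
  qed (rule gm)
  have pt: "exp (- a) * (1 - a * (c w - 1)) \<le> g w" for w
  proof -
    have "1 + (- a * (c w - 1)) \<le> exp (- a * (c w - 1))" by (rule exp_ge_add_one_self)
    then have "exp (- a) * (1 - a * (c w - 1)) \<le> exp (- a) * exp (- a * (c w - 1))"
      by (intro mult_left_mono) auto
    also have "\<dots> = g w" by (simp add: g_def mult_exp_exp algebra_simps)
    finally show ?thesis .
  qed
  have li: "integrable (gauss :: (real^'n) measure) (\<lambda>w. exp (- a) * (1 - a * (c w - 1)))"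
    using ci by (intro integrable_mult_right integrable_diff integrable_mult_right) auto
  have "exp (- a) = (\<integral>w. exp (- a) * (1 - a * (c w - 1)) \<partial>(gauss :: (real^'n) measure))"
  proof -
    have "(\<integral>w. exp (- a) * (1 - a * (c w - 1)) \<partial>(gauss :: (real^'n) measure))
        = exp (- a) * ((\<integral>w. 1 \<partial>(gauss :: (real^'n) measure)) - a * ((\<integral>w. c w \<partial>gauss) - (\<integral>w. 1 \<partial>(gauss :: (real^'n) measure))))"
      using ci by (simp add: integral_diff integral_mult_right_zero)
    moreover have "measure (gauss :: (real^'n) measure) UNIV = 1" using G.prob_space by simp
    ultimately show ?thesis by (simp add: cint)
  qed
  also have "\<dots> \<le> (\<integral>w. g w \<partial>(gauss :: (real^'n) measure))"
    by (rule integral_mono[OF li gi pt])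
  finally have le: "exp (- a) \<le> (\<integral>w. g w \<partial>(gauss :: (real^'n) measure))" .
  have "(\<integral>\<^sup>+w. ennreal (g w) \<partial>(gauss :: (real^'n) measure)) = ennreal (\<integral>w. g w \<partial>(gauss :: (real^'n) measure))"
    by (rule nn_integral_eq_integral[OF gi]) (simp add: g_def)
  then show ?thesis using le by (simp add: g_def c_def N_def ennreal_leI)
qed

definition hq :: "real^'n^'n \<Rightarrow> 'n \<Rightarrow> real^'n^'n \<Rightarrow> real" where
  "hq Q j U = column j U \<bullet> (Q *v column j U)"

lemma hq_cont: "continuous_on S (\<lambda>x. hq Q j (f x))" if "continuous_on S f"
  unfolding hq_def by (intro continuous_intros that)

context haar
begin

lemma sphere_mgf:
  assumes Q: "psd_matrix Q" and lam: "0 \<le> lam"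
  shows "(\<integral>\<^sup>+U. ennreal (exp (- lam * hq Q j U)) \<partial>M)
    \<le> ennreal (exp (- (lam / real CARD('n)) * trace Q + (lam / real CARD('n))\<^sup>2 * frobsq Q))"
proof -
  interpret G: prob_space "gauss :: (real^'n) measure" by (rule prob_space_gauss)
  interpret P: pair_sigma_finite M "gauss :: (real^'n) measure" by unfold_locales
  define N where "N = real CARD('n)"
  have N: "0 < N" by (simp add: N_def)
  have hpos: "0 \<le> hq Q j U" for U using Q by (simp add: hq_def psd_matrix_def)
  define F where "F = (\<lambda>(U, w::real^'n). ennreal (exp (- lam * ((norm w)\<^sup>2 / N) * hq Q j U)))"
  define F2 where "F2 = (\<lambda>(U::real^'n^'n, w::real^'n). ennreal (exp (- (lam / N) * ((U *v w) \<bullet> (Q *v (U *v w))))))"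
  have Fm: "F \<in> borel_measurable (M \<Otimes>\<^sub>M gauss)"
  proof -
    have "(\<lambda>p::(real^'n^'n) \<times> (real^'n). exp (- lam * ((norm (snd p))\<^sup>2 / N) * hq Q j (fst p))) \<in> borel_measurable (M \<Otimes>\<^sub>M gauss)"
      apply (rule cont_meas_pair[OF sets_M sets_gauss])
      apply (intro continuous_intros hq_cont)
      using N by auto
    then show ?thesis unfolding F_def case_prod_beta' by measurable
  qed
  have F2m: "F2 \<in> borel_measurable (M \<Otimes>\<^sub>M gauss)"
  proof -
    have "(\<lambda>p::(real^'n^'n) \<times> (real^'n). exp (- (lam / N) * ((fst p *v snd p) \<bullet> (Q *v (fst p *v snd p))))) \<in> borel_measurable (M \<Otimes>\<^sub>M gauss)"
      by (rule cont_meas_pair[OF sets_M sets_gauss]) (intro continuous_intros)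
    then show ?thesis unfolding F2_def case_prod_beta' by measurable
  qed
  have step1: "(\<integral>\<^sup>+U. ennreal (exp (- lam * hq Q j U)) \<partial>M) \<le> (\<integral>\<^sup>+U. (\<integral>\<^sup>+w. F (U, w) \<partial>gauss) \<partial>M)"
  proof (rule nn_integral_mono)
    fix U
    have "ennreal (exp (- (lam * hq Q j U))) \<le> (\<integral>\<^sup>+w. ennreal (exp (- (lam * hq Q j U) * ((norm w)\<^sup>2 / real CARD('n)))) \<partial>(gauss :: (real^'n) measure))"
      by (rule jensen_gauss) (use lam hpos in simp)
    then show "ennreal (exp (- lam * hq Q j U)) \<le> (\<integral>\<^sup>+w. F (U, w) \<partial>gauss)"
      by (simp add: F_def N_def ac_simps)
  qed
  also have "\<dots> = (\<integral>\<^sup>+w. (\<integral>\<^sup>+U. F (U, w) \<partial>M) \<partial>gauss)"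
    by (rule P.Fubini[OF Fm, symmetric])
  also have "\<dots> = (\<integral>\<^sup>+w. (\<integral>\<^sup>+U. F2 (U, w) \<partial>M) \<partial>gauss)"
  proof (rule nn_integral_cong)
    fix w :: "real^'n"
    show "(\<integral>\<^sup>+U. F (U, w) \<partial>M) = (\<integral>\<^sup>+U. F2 (U, w) \<partial>M)"
    proof (cases "w = 0")
      case True then show ?thesis by (simp add: F_def F2_def)
    next
      case False
      define z where "z = w /\<^sub>R norm w"
      have nz: "norm z = 1" using False by (simp add: z_def)
      obtain B where oB: "orthogonal_matrix B" and Bz: "B *v axis j 1 = z"
        using orthogonal_matrix_exists_basis[OF nz] by metis
      define f where "f U = F (U, w)" for U
      have fm0: "(\<lambda>U. exp (- lam * ((norm w)\<^sup>2 / N) * hq Q j U)) \<in> borel_measurable borel"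
        by (intro borel_measurable_continuous_onI continuous_intros hq_cont continuous_on_id)
      have feq: "f = (\<lambda>U. ennreal (exp (- lam * ((norm w)\<^sup>2 / N) * hq Q j U)))"
        by (simp add: f_def F_def fun_eq_iff)
      have fm: "f \<in> borel_measurable borel"
        unfolding feq by (rule measurable_compose[OF fm0 measurable_ennreal])
      have wz: "w = norm w *\<^sub>R z" using False by (simp add: z_def)
      have "f (U ** B) = F2 (U, w)" for U
      proof -
        have col: "column j (U ** B) = U *v z"
          by (metis Bz matrix_vector_mul_assoc matrix_vector_mult_basis)
        have "(U *v w) \<bullet> (Q *v (U *v w)) = (norm w)\<^sup>2 * hq Q j (U ** B)"
        proof -
          have Uw: "U *v w = norm w *\<^sub>R (U *v z)"
            by (subst wz) (simp add: matrix_vector_mult_scaleR)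
          show ?thesis by (simp add: Uw hq_def col matrix_vector_mult_scaleR power2_eq_square)
        qed
        then show ?thesis using N by (simp add: f_def F_def F2_def N_def field_simps)
      qed
      then have "(\<integral>\<^sup>+U. F2 (U, w) \<partial>M) = (\<integral>\<^sup>+U. f (U ** B) \<partial>M)" by simp
      also have "\<dots> = (\<integral>\<^sup>+U. f U \<partial>M)" by (rule right_inv[OF oB fm])
      finally show ?thesis by (simp add: f_def)
    qed
  qed
  also have "\<dots> = (\<integral>\<^sup>+U. (\<integral>\<^sup>+w. F2 (U, w) \<partial>gauss) \<partial>M)"
    by (rule P.Fubini[OF F2m])
  also have "\<dots> = (\<integral>\<^sup>+U. (\<integral>\<^sup>+w. ennreal (exp (- (lam / N) * (w \<bullet> (Q *v w)))) \<partial>(gauss :: (real^'n) measure)) \<partial>M)"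
  proof (rule nn_integral_cong_AE)
    show "AE U in M. (\<integral>\<^sup>+w. F2 (U, w) \<partial>gauss) = (\<integral>\<^sup>+w. ennreal (exp (- (lam / N) * (w \<bullet> (Q *v w)))) \<partial>(gauss :: (real^'n) measure))"
      using AE_orth
    proof (rule AE_mp, intro AE_I2 impI)
      fix U :: "real^'n^'n" assume oU: "orthogonal_matrix U"
      have gm: "(\<lambda>y::real^'n. ennreal (exp (- (lam / N) * (y \<bullet> (Q *v y))))) \<in> borel_measurable borel"
        by (intro borel_measurable_continuous_onI measurable_compose[OF _ measurable_ennreal]) (intro continuous_intros)
      show "(\<integral>\<^sup>+w. F2 (U, w) \<partial>gauss) = (\<integral>\<^sup>+w. ennreal (exp (- (lam / N) * (w \<bullet> (Q *v w)))) \<partial>(gauss :: (real^'n) measure))"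
        unfolding F2_def using gauss_orth[OF oU gm] by simp
    qed
  qed
  also have "\<dots> = (\<integral>\<^sup>+w. ennreal (exp (- (lam / N) * (w \<bullet> (Q *v w)))) \<partial>(gauss :: (real^'n) measure))"
    using emeasure_space_1 by simp
  also have "\<dots> \<le> ennreal (exp (- (lam / N) * trace Q + (lam / N)\<^sup>2 * frobsq Q))"
    by (rule gauss_qf_mgf[OF Q]) (use lam N in simp)
  finally show ?thesis by (simp add: N_def)
qed

end

lemma sum_UNIV_Plus: "(\<Sum>k\<in>(UNIV :: ('a::finite + 'b::finite) set). g k) = (\<Sum>a\<in>UNIV. g (Inl a)) + (\<Sum>b\<in>UNIV. g (Inr b))"
proof -
  have "(\<Sum>k\<in>(UNIV :: ('a + 'b) set). g k) = (\<Sum>k\<in>(UNIV <+> UNIV). g k)" by simp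
  also have "\<dots> = (\<Sum>a\<in>UNIV. g (Inl a)) + (\<Sum>b\<in>UNIV. g (Inr b))"
    by (subst sum.Plus) (simp_all add: o_def)
  finally show ?thesis .
qed

lemma trace_block: "trace (block_diag Q R) = trace Q + trace R"
  by (simp add: trace_def block_diag_def sum_UNIV_Plus)

lemma frob_block: "(frob_norm (block_diag Q R))\<^sup>2 = frobsq Q + frobsq R"
proof -
  have "(frob_norm (block_diag Q R))\<^sup>2 = (\<Sum>i\<in>UNIV. \<Sum>j\<in>UNIV. (block_diag Q R $ i $ j)\<^sup>2)"
    unfolding frob_norm_def by (simp add: sum_nonneg)
  also have "\<dots> = frobsq Q + frobsq R"
    by (simp add: sum_UNIV_Plus block_diag_def frobsq_def)
  finally show ?thesis .
qed

lemma frobsq_nonneg: "0 \<le> frobsq Q" by (simp add: frobsq_def sum_nonneg)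

lemma trace_psd: "psd_matrix Q \<Longrightarrow> 0 \<le> trace Q"
proof -
  assume Q: "psd_matrix Q"
  have "0 \<le> axis i 1 \<bullet> (Q *v axis i 1)" for i using Q by (simp add: psd_matrix_def)
  then have "0 \<le> Q $ i $ i" for i by (simp add: matrix_vector_mult_basis column_def inner_axis' )
  then show ?thesis by (simp add: trace_def sum_nonneg)
qed

lemma sum_hq: "orthogonal_matrix U \<Longrightarrow> (\<Sum>j\<in>UNIV. hq Q j U) = trace Q"
proof -
  assume U: "orthogonal_matrix U"
  have UUt: "U ** transpose U = mat 1" using U by (simp add: orthogonal_matrix_def)
  have "(\<Sum>j\<in>UNIV. hq Q j U) = (\<Sum>j\<in>UNIV. \<Sum>a\<in>UNIV. \<Sum>b\<in>UNIV. U $ a $ j * Q $ a $ b * U $ b $ j)"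
    by (simp add: hq_def column_def inner_vec_def matrix_vector_mult_def sum_distrib_left mult.assoc)
  also have "\<dots> = (\<Sum>a\<in>UNIV. \<Sum>b\<in>UNIV. Q $ a $ b * (\<Sum>j\<in>UNIV. U $ a $ j * U $ b $ j))"
  proof -
    have "(\<Sum>j\<in>UNIV. \<Sum>a\<in>UNIV. \<Sum>b\<in>UNIV. U $ a $ j * Q $ a $ b * U $ b $ j)
        = (\<Sum>a\<in>UNIV. \<Sum>j\<in>UNIV. \<Sum>b\<in>UNIV. U $ a $ j * Q $ a $ b * U $ b $ j)"
      by (rule sum.swap)
    also have "\<dots> = (\<Sum>a\<in>UNIV. \<Sum>b\<in>UNIV. \<Sum>j\<in>UNIV. U $ a $ j * Q $ a $ b * U $ b $ j)"
      by (intro sum.cong refl sum.swap)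
    also have "\<dots> = (\<Sum>a\<in>UNIV. \<Sum>b\<in>UNIV. Q $ a $ b * (\<Sum>j\<in>UNIV. U $ a $ j * U $ b $ j))"
      by (simp add: sum_distrib_left mult.commute mult.left_commute)
    finally show ?thesis .
  qed
  also have "\<dots> = (\<Sum>a\<in>UNIV. \<Sum>b\<in>UNIV. Q $ a $ b * (if a = b then 1 else 0))"
  proof -
    have "(\<Sum>j\<in>UNIV. U $ a $ j * U $ b $ j) = (if a = b then 1 else 0)" for a b
    proof -
      have "(\<Sum>j\<in>UNIV. U $ a $ j * U $ b $ j) = (U ** transpose U) $ a $ b"
        by (simp add: matrix_matrix_mult_def transpose_def)
      then show ?thesis by (simp add: UUt mat_def)
    qed
    then show ?thesis by simp
  qed
  also have "\<dots> = (\<Sum>a\<in>UNIV. \<Sum>b\<in>UNIV. if a = b then Q $ a $ b else 0)"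
    by (intro sum.cong refl) simp
  also have "\<dots> = trace Q" by (simp add: trace_def)
  finally show ?thesis .
qed


lemma hq_cont2[continuous_intros]: "continuous_on S f \<Longrightarrow> continuous_on S (\<lambda>x. hq Q j (f x))"
  by (rule hq_cont)

context haar
begin

lemma sets_MM: "sets (M \<Otimes>\<^sub>M M) = sets borel"
proof -
  have "sets (M \<Otimes>\<^sub>M M) = sets (borel \<Otimes>\<^sub>M borel)" using sets_M sets_M by (rule sets_pair_measure_cong)
  also have "\<dots> = sets borel" by (simp only: borel_prod)
  finally show ?thesis .
qed

lemma space_MM[simp]: "space (M \<Otimes>\<^sub>M M) = UNIV"
  using sets_eq_imp_space_eq[OF sets_MM] by simp

lemma col_tail:
  assumes Q: "psd_matrix Q" and R: "psd_matrix R" and mu: "0 \<le> mu"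
  shows "emeasure (M \<Otimes>\<^sub>M M) {p. hq Q j (fst p) + hq R j (snd p) < t}
    \<le> ennreal (exp (mu * real CARD('n) * t - mu * (trace Q + trace R) + mu\<^sup>2 * (frobsq Q + frobsq R)))"
proof -
  interpret P: pair_prob_space M M by unfold_locales
  define N where "N = real CARD('n)"
  have N: "0 < N" by (simp add: N_def)
  define lam where "lam = mu * N"
  have lam: "0 \<le> lam" using mu N by (simp add: lam_def)
  define E where "E = {p. hq Q j (fst p) + hq R j (snd p) < t}"
  have Eo: "open E" unfolding E_def
    by (intro open_Collect_less continuous_intros)
  have Em: "E \<in> sets (M \<Otimes>\<^sub>M M)" using Eo by (simp add: sets_MM)
  define a where "a U = ennreal (exp (- lam * hq Q j U))" for U
  define b where "b V = ennreal (exp (- lam * hq R j V))" for V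
  have am: "a \<in> borel_measurable M"
  proof -
    have "(\<lambda>U. exp (- lam * hq Q j U)) \<in> borel_measurable M"
      by (rule cont_meas[OF sets_M]) (intro continuous_intros continuous_on_id)
    then show ?thesis unfolding a_def by measurable
  qed
  have bm: "b \<in> borel_measurable M"
  proof -
    have "(\<lambda>U. exp (- lam * hq R j U)) \<in> borel_measurable M"
      by (rule cont_meas[OF sets_M]) (intro continuous_intros continuous_on_id)
    then show ?thesis unfolding b_def by measurable
  qed
  define c where "c = ennreal (exp (lam * t))"
  have pt: "indicator E p \<le> c * a (fst p) * b (snd p)" for p
  proof (cases "p \<in> E")
    case True
    then have "0 \<le> lam * (t - (hq Q j (fst p) + hq R j (snd p)))" using lam by (simp add: E_def)
    then have "1 \<le> exp (lam * (t - (hq Q j (fst p) + hq R j (snd p))))" by simp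
    also have "\<dots> = exp (lam * t) * exp (- lam * hq Q j (fst p)) * exp (- lam * hq R j (snd p))"
      by (simp add: mult_exp_exp algebra_simps)
    finally have "1 \<le> exp (lam * t) * exp (- lam * hq Q j (fst p)) * exp (- lam * hq R j (snd p))" .
    then have "ennreal 1 \<le> ennreal (exp (lam * t) * exp (- lam * hq Q j (fst p)) * exp (- lam * hq R j (snd p)))"
      by (rule ennreal_leI)
    then show ?thesis using True by (simp add: c_def a_def b_def ennreal_mult)
  qed simp
  have pm: "(\<lambda>p. c * a (fst p) * b (snd p)) \<in> borel_measurable (M \<Otimes>\<^sub>M M)"
    using am bm by measurable
  have "emeasure (M \<Otimes>\<^sub>M M) E = (\<integral>\<^sup>+p. indicator E p \<partial>(M \<Otimes>\<^sub>M M))"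
    using Em by simp
  also have "\<dots> \<le> (\<integral>\<^sup>+p. c * a (fst p) * b (snd p) \<partial>(M \<Otimes>\<^sub>M M))"
    by (rule nn_integral_mono) (rule pt)
  also have "\<dots> = (\<integral>\<^sup>+U. (\<integral>\<^sup>+V. c * a U * b V \<partial>M) \<partial>M)"
    using nn_integral_fst[OF pm] by simp
  also have "\<dots> = (\<integral>\<^sup>+U. c * a U * (\<integral>\<^sup>+V. b V \<partial>M) \<partial>M)"
    by (intro nn_integral_cong) (simp add: nn_integral_cmult bm)
  also have "\<dots> = c * (\<integral>\<^sup>+U. a U \<partial>M) * (\<integral>\<^sup>+V. b V \<partial>M)"
  proof -
    have cam: "(\<lambda>U. c * a U) \<in> borel_measurable M" using am by measurable
    show ?thesis by (simp add: nn_integral_multc[OF cam] nn_integral_cmult[OF am])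
  qed
  also have "\<dots> \<le> c * ennreal (exp (- (lam / N) * trace Q + (lam / N)\<^sup>2 * frobsq Q))
                   * ennreal (exp (- (lam / N) * trace R + (lam / N)\<^sup>2 * frobsq R))"
    unfolding a_def b_def
    by (intro mult_mono sphere_mgf[OF Q lam, unfolded N_def[symmetric]] sphere_mgf[OF R lam, unfolded N_def[symmetric]]) auto
  also have "\<dots> = ennreal (exp (mu * real CARD('n) * t - mu * (trace Q + trace R) + mu\<^sup>2 * (frobsq Q + frobsq R)))"
    using N by (simp add: c_def lam_def ennreal_mult'[symmetric] mult_exp_exp N_def algebra_simps)
  finally show ?thesis by (simp add: E_def)
qed

end

lemma expo_arith:
  fixes T G g nn :: real
  assumes G: "0 < G" and nn: "0 < nn" and g: "0 \<le> g" "g \<le> 1"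
  defines "mu \<equiv> T * (1 + g) / (4 * G)"
  shows "mu * nn * (T / (2 * nn) * (1 - g)) - mu * T + mu\<^sup>2 * G \<le> - (T ^ 2 / (4 * G)) * g\<^sup>2"
proof -
  have a: "mu * nn * (T / (2 * nn) * (1 - g)) = mu * T * (1 - g) / 2"
    using nn by simp
  have b: "mu\<^sup>2 * G = mu * (T * (1 + g) / 4)"
    using G unfolding mu_def power2_eq_square by simp
  have c: "mu * T * (1 - g) / 2 - mu * T + mu * (T * (1 + g) / 4) = - (mu * (T * (1 + g) / 4))"
    by (simp add: field_simps)
  have d: "mu * (T * (1 + g) / 4) = (T * (1 + g))\<^sup>2 / (16 * G)"
    unfolding mu_def power2_eq_square by simp
  have e: "(T ^ 2 / (4 * G)) * g\<^sup>2 = (2 * T * g)\<^sup>2 / (16 * G)"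
    by (simp add: power2_eq_square)
  have f: "(2 * T * g)\<^sup>2 \<le> (T * (1 + g))\<^sup>2"
  proof -
    have "\<bar>2 * T * g\<bar> \<le> \<bar>T * (1 + g)\<bar>"
    proof -
      have "\<bar>T\<bar> * (2 * g) \<le> \<bar>T\<bar> * (1 + g)" using g by (intro mult_left_mono) auto
      then show ?thesis using g by (simp add: abs_mult ac_simps)
    qed
    then show ?thesis by (simp add: abs_le_square_iff)
  qed
  have "(2 * T * g)\<^sup>2 / (16 * G) \<le> (T * (1 + g))\<^sup>2 / (16 * G)"
    using f G by (intro divide_right_mono) auto
  then have ineq: "- ((T * (1 + g))\<^sup>2 / (16 * G)) \<le> - ((2 * T * g)\<^sup>2 / (16 * G))" by simp
  have "mu * nn * (T / (2 * nn) * (1 - g)) - mu * T + mu\<^sup>2 * G = mu * T * (1 - g) / 2 - mu * T + mu * (T * (1 + g) / 4)"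
    by (simp only: a b)
  also have "\<dots> = - (mu * (T * (1 + g) / 4))" by (rule c)
  also have "\<dots> = - ((T * (1 + g))\<^sup>2 / (16 * G))" by (simp only: d)
  also have "\<dots> \<le> - ((2 * T * g)\<^sup>2 / (16 * G))" by (rule ineq)
  also have "\<dots> = - (T ^ 2 / (4 * G)) * g\<^sup>2" using e by simp
  finally show ?thesis .
qed

theorem mainTheorem1:
  fixes Q R :: "real^'n^'n" and M :: "(real^'n^'n) measure"
  assumes "psd_matrix Q" and "psd_matrix R"
    and "haar_orthogonal M"
  defines "S \<equiv> block_diag Q R"
    and "n \<equiv> real CARD('n)"
    and "P \<equiv> (\<lambda>E. measure (M \<Otimes>\<^sub>M M) {(U, V). E U V})"
  shows "(\<forall>\<gamma>::real. 0 \<le> \<gamma> \<and> \<gamma> \<le> 1 \<longrightarrow>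
           P (\<lambda>U V. min_diag Q R U V \<ge> trace S / (2 * n) * (1 - \<gamma>))
             \<ge> 1 - n * exp (- (trace S ^ 2 / (4 * frob_norm S ^ 2)) * \<gamma>^2) - 2 * exp (- n / 8))
       \<and> (\<forall>\<gamma>::real. 0 \<le> \<gamma> \<longrightarrow>
           P (\<lambda>U V. min_diag Q R U V \<le> 4 * trace S / n * (1 + \<gamma>))
             \<ge> (if \<gamma> \<le> frob_norm S ^ 2 / (trace S * op_norm S)
                 then 1 - exp (- (trace S ^ 2 / (8 * frob_norm S ^ 2)) * \<gamma>^2) - 2 * exp (- n / 8)
                 else 1 - exp (- (trace S / (8 * op_norm S)) * \<gamma>) - 2 * exp (- n / 8)))"
proof -
  note Q = assms(1) and R = assms(2)
  interpret haar M by (rule haar.intro) (rule assms(3))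
  interpret PP: pair_prob_space M M by unfold_locales
  have n: "0 < n" by (simp add: n_def)
  define X where "X j p = hq Q j (fst p) + hq R j (snd p)" for j p
  have Xc: "continuous_on UNIV (X j)" for j
    unfolding X_def by (intro continuous_intros continuous_on_id)
  have md: "min_diag Q R U V = Min (range (\<lambda>j. X j (U, V)))" for U V
    by (simp add: min_diag_def X_def hq_def)
  have fin: "finite (range (\<lambda>j. X j p))" "range (\<lambda>j. X j p) \<noteq> {}" for p by auto
  have trS: "trace S = trace Q + trace R" by (simp add: S_def trace_block)
  have frS: "(frob_norm S)\<^sup>2 = frobsq Q + frobsq R" by (simp add: S_def frob_block)
  have trpos: "0 \<le> trace S" using trace_psd[OF Q] trace_psd[OF R] trS by simp
  have Pm: "{(U, V). E U V} = {p. E (fst p) (snd p)}" for E :: "_ \<Rightarrow> _ \<Rightarrow> bool" by auto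
  have part1: "P (\<lambda>U V. min_diag Q R U V \<ge> trace S / (2 * n) * (1 - g))
             \<ge> 1 - n * exp (- (trace S ^ 2 / (4 * frob_norm S ^ 2)) * g^2) - 2 * exp (- n / 8)"
    if g: "0 \<le> g" "g \<le> 1" for g
  proof -
    define thr where "thr = trace S / (2 * n) * (1 - g)"
    define A where "A = {p. thr \<le> min_diag Q R (fst p) (snd p)}"
    define E where "E j = {p. X j p < thr}" for j
    have Em: "E j \<in> sets (M \<Otimes>\<^sub>M M)" for j
    proof -
      have "open (E j)" unfolding E_def by (intro open_Collect_less Xc continuous_on_const)
      then show ?thesis by (simp add: sets_MM)
    qed
    have Acomp: "UNIV - A = (\<Union>j\<in>UNIV. E j)"
      by (auto simp: A_def E_def md Min_less_iff not_le) (meson leD)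
    have Am: "A \<in> sets (M \<Otimes>\<^sub>M M)"
    proof -
      have "A = UNIV - (\<Union>j\<in>UNIV. E j)" using Acomp by blast
      moreover have "(\<Union>j\<in>UNIV. E j) \<in> sets (M \<Otimes>\<^sub>M M)" using Em by auto
      ultimately show ?thesis by (metis sets.compl_sets space_MM)
    qed
    have PA: "P (\<lambda>U V. min_diag Q R U V \<ge> thr) = 1 - measure (M \<Otimes>\<^sub>M M) (\<Union>j\<in>UNIV. E j)"
    proof -
      have "P (\<lambda>U V. min_diag Q R U V \<ge> thr) = measure (M \<Otimes>\<^sub>M M) A"
        by (simp add: P_def Pm A_def)
      also have "\<dots> = 1 - measure (M \<Otimes>\<^sub>M M) (UNIV - A)"
        using PP.prob_compl[OF Am] by simp
      finally show ?thesis by (simp add: Acomp)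
    qed
    have sub: "measure (M \<Otimes>\<^sub>M M) (\<Union>j\<in>UNIV. E j) \<le> (\<Sum>j\<in>UNIV. measure (M \<Otimes>\<^sub>M M) (E j))"
      by (rule PP.finite_measure_subadditive_finite) (use Em in auto)
    show ?thesis
    proof (cases "frob_norm S = 0")
      case True
      have "0 \<le> P (\<lambda>U V. min_diag Q R U V \<ge> thr)" by (simp add: P_def)
      moreover have "1 - n * exp (- (trace S ^ 2 / (4 * frob_norm S ^ 2)) * g^2) - 2 * exp (- n / 8) \<le> 0"
      proof -
        have ex1: "exp (- (trace S ^ 2 / (4 * frob_norm S ^ 2)) * g^2) = 1" using True by simp
        moreover have "1 \<le> n"
        proof -
          have c0: "0 < CARD('n)" by simp
          then show ?thesis unfolding n_def by linarith
        qed
        moreover have "0 < exp (- n / 8)" by simp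
        ultimately show ?thesis unfolding ex1 by linarith
      qed
      ultimately show ?thesis by (simp add: thr_def)
    next
      case False
      define G where "G = (frob_norm S)\<^sup>2"
      have G: "0 < G" using False by (simp add: G_def)
      define mu where "mu = trace S * (1 + g) / (4 * G)"
      have mu: "0 \<le> mu" using trpos g G by (simp add: mu_def)
      have Ej: "measure (M \<Otimes>\<^sub>M M) (E j) \<le> exp (- (trace S ^ 2 / (4 * G)) * g\<^sup>2)" for j
      proof -
        have "emeasure (M \<Otimes>\<^sub>M M) (E j) \<le> ennreal (exp (mu * n * thr - mu * trace S + mu\<^sup>2 * G))"
          using col_tail[OF Q R mu, of j thr] by (simp add: E_def X_def trS frS G_def n_def)
        then have "measure (M \<Otimes>\<^sub>M M) (E j) \<le> exp (mu * n * thr - mu * trace S + mu\<^sup>2 * G)"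
          by (simp add: PP.emeasure_eq_measure)
        also have "\<dots> \<le> exp (- (trace S ^ 2 / (4 * G)) * g\<^sup>2)"
          unfolding thr_def mu_def using expo_arith[OF G n g] by simp
        finally show ?thesis .
      qed
      have "(\<Sum>j\<in>UNIV. measure (M \<Otimes>\<^sub>M M) (E j)) \<le> (\<Sum>j\<in>(UNIV::'n set). exp (- (trace S ^ 2 / (4 * G)) * g\<^sup>2))"
        by (intro sum_mono Ej)
      also have "\<dots> = n * exp (- (trace S ^ 2 / (4 * G)) * g\<^sup>2)" by (simp add: n_def)
      finally have "measure (M \<Otimes>\<^sub>M M) (\<Union>j\<in>UNIV. E j) \<le> n * exp (- (trace S ^ 2 / (4 * G)) * g\<^sup>2)"
        using sub by linarith
      moreover have "0 < exp (- n / 8)" by simp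
      ultimately show ?thesis using PA unfolding thr_def G_def by linarith
    qed
  qed
  have part2: "P (\<lambda>U V. min_diag Q R U V \<le> 4 * trace S / n * (1 + g)) \<ge> (if g \<le> frob_norm S ^ 2 / (trace S * op_norm S)
                 then 1 - exp (- (trace S ^ 2 / (8 * frob_norm S ^ 2)) * g^2) - 2 * exp (- n / 8)
                 else 1 - exp (- (trace S / (8 * op_norm S)) * g) - 2 * exp (- n / 8))"
    if g: "0 \<le> g" for g
  proof -
    define c where "c = 4 * trace S / n * (1 + g)"
    define B where "B = {p. min_diag Q R (fst p) (snd p) \<le> c}"
    have Bm: "B \<in> sets (M \<Otimes>\<^sub>M M)"
    proof -
      have "B = (\<Union>j\<in>UNIV. {p. X j p \<le> c})" by (auto simp: B_def md Min_le_iff)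
      moreover have "closed {p. X j p \<le> c}" for j by (intro closed_Collect_le Xc continuous_on_const)
      ultimately have "closed B" by auto
      then show ?thesis by (simp add: sets_MM)
    qed
    have inB: "(U, V) \<in> B" if oU: "orthogonal_matrix U" and oV: "orthogonal_matrix V" for U V
    proof -
      have sumX: "(\<Sum>j\<in>UNIV. X j (U, V)) = trace S"
        by (simp add: X_def sum.distrib sum_hq[OF oU] sum_hq[OF oV] trS)
      have "of_nat (card (UNIV::'n set)) * Min (range (\<lambda>j. X j (U, V))) \<le> (\<Sum>j\<in>UNIV. X j (U, V))"
        by (rule sum_bounded_below) (simp add: fin)
      then have "n * min_diag Q R U V \<le> trace S" by (simp add: md sumX n_def)
      then have "min_diag Q R U V \<le> trace S / n" using n by (simp add: field_simps)
      also have "\<dots> \<le> c" using n trpos g by (simp add: c_def field_simps)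
      finally show ?thesis by (simp add: B_def)
    qed
    have "AE p in M \<Otimes>\<^sub>M M. p \<in> B"
    proof (rule PP.AE_pair_measure)
      show "{x \<in> space (M \<Otimes>\<^sub>M M). x \<in> B} \<in> sets (M \<Otimes>\<^sub>M M)" using Bm by simp
      have "AE x in M. orthogonal_matrix x \<longrightarrow> (AE y in M. (x, y) \<in> B)"
      proof (rule AE_I2, rule impI)
        fix x :: "real^'n^'n" assume ox: "orthogonal_matrix x"
        have "AE y in M. orthogonal_matrix y \<longrightarrow> (x, y) \<in> B" by (rule AE_I2) (auto intro: inB[OF ox])
        then show "AE y in M. (x, y) \<in> B" by (rule AE_mp[OF AE_orth])
      qed
      then show "AE x in M. AE y in M. (x, y) \<in> B" by (rule AE_mp[OF AE_orth])
    qed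
    then have "measure (M \<Otimes>\<^sub>M M) B = 1" using PP.AE_in_set_eq_1[OF Bm] by simp
    then have "P (\<lambda>U V. min_diag Q R U V \<le> c) = 1" by (simp add: P_def Pm B_def)
    moreover have "(if g \<le> frob_norm S ^ 2 / (trace S * op_norm S)
                 then 1 - exp (- (trace S ^ 2 / (8 * frob_norm S ^ 2)) * g^2) - 2 * exp (- n / 8)
                 else 1 - exp (- (trace S / (8 * op_norm S)) * g) - 2 * exp (- n / 8)) \<le> 1"
    proof -
      have h: "1 - exp x - 2 * exp y \<le> (1::real)" for x y
        using exp_gt_zero[of x] exp_gt_zero[of y] by linarith
      show ?thesis
        apply (split if_split)
        apply (intro conjI impI)
         apply (rule h)
        apply (rule h)
        done
    qed
    ultimately show ?thesis by (simp add: c_def)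
  qed
  show ?thesis using part1 part2 by blast
qed

end
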